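(* Let $\mathbf{k}$ be an algebraically closed field with $\mathrm{char}(\mathbf{k})\neq 2$ and let $E=\bigwedge E_1$ be the exterior algebra of a $5$-dimensional $\mathbf{k}$-vector space $E_1$. Let $I\subseteq E$ be a homogeneous ideal such that $E/I$ has Hilbert function $(1,5,7,2)$. If $I$ contains no pencil of rank-$2$ quadrics, then $I_2\subseteq\bigwedge^2V\subseteq E_2$ for some $4$-dimensional subspace $V\subseteq E_1$.
   Context: A quadric $q\in E_2$ is identified with a $5\times 5$ skew-symmetric matrix; its rank is the rank of this matrix (always even). Rank $2$ means $q=\ell_1\wedge\ell_2$ with $\ell_1,\ell_2\in E_1$ linearly independent. A pencil of quadrics is a $2$-dimensional subspace of $E_2$; a pencil of rank-$2$ quadrics is one all of whose nonzero elements have rank $2$. *)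

theory Defs
  imports Main "HOL-Library.Function_Algebras" "HOL-Computational_Algebra.Polynomial"
begin

text \<open>The exterior algebra E of a 5-dimensional k-vector space E_1 with basis
  e_0,...,e_4 is modelled concretely: an element is a coefficient function
  on subsets S of {0..<5}, the coefficient of the basis monomial e_S
  (wedge of the e_i, i in S, in increasing order).\<close>

type_synonym 'a ext = "nat set \<Rightarrow> 'a"

definition scaleE :: "'a::field \<Rightarrow> 'a ext \<Rightarrow> 'a ext" where
  "scaleE c f = (\<lambda>S. c * f S)"

definition extAlg :: "'a::field ext set" where
  "extAlg = {f. \<forall>S. f S \<noteq> 0 \<longrightarrow> S \<subseteq> {0..<5}}"

definition grade :: "nat \<Rightarrow> 'a::field ext set" where
  "grade d = {f. \<forall>S. f S \<noteq> 0 \<longrightarrow> S \<subseteq> {0..<5} \<and> card S = d}"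

definition homog_part :: "nat \<Rightarrow> 'a::field ext \<Rightarrow> 'a ext" where
  "homog_part d f = (\<lambda>S. if card S = d then f S else 0)"

text \<open>Sign of e_S wedge e_T for disjoint S, T.\<close>
definition wsign :: "nat set \<Rightarrow> nat set \<Rightarrow> 'a::field" where
  "wsign S T = (-1) ^ card {(s, t). s \<in> S \<and> t \<in> T \<and> t < s}"

definition wedge :: "'a::field ext \<Rightarrow> 'a ext \<Rightarrow> 'a ext" where
  "wedge f g = (\<lambda>U. if U \<subseteq> {0..<5}
      then (\<Sum>S\<in>Pow U. f S * g (U - S) * wsign S (U - S)) else 0)"

definition homogeneous_ideal :: "'a::field ext set \<Rightarrow> bool" where
  "homogeneous_ideal I \<longleftrightarrow>
     I \<subseteq> extAlg \<and> ((\<lambda>S. 0) \<in> I) \<and>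
     (\<forall>f\<in>I. \<forall>g\<in>I. (\<lambda>S. f S + g S) \<in> I) \<and>
     (\<forall>c f. f \<in> I \<longrightarrow> scaleE c f \<in> I) \<and>
     (\<forall>f\<in>I. \<forall>g\<in>extAlg. wedge g f \<in> I \<and> wedge f g \<in> I) \<and>
     (\<forall>f\<in>I. \<forall>d. homog_part d f \<in> I)"

definition hilbert_fun :: "'a::field ext set \<Rightarrow> nat \<Rightarrow> nat" where
  "hilbert_fun I d =
     vector_space.dim (scaleE :: 'a \<Rightarrow> _) (grade d) - vector_space.dim (scaleE :: 'a \<Rightarrow> _) (I \<inter> grade d)"

definition rank2_quadric :: "'a::field ext \<Rightarrow> bool" where
  "rank2_quadric q \<longleftrightarrow>
     (\<exists>l1 l2. l1 \<in> grade 1 \<and> l2 \<in> grade 1 \<and>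
        \<not> module.dependent (scaleE :: 'a \<Rightarrow> _) {l1, l2} \<and> l1 \<noteq> l2 \<and>
        q = wedge l1 l2)"

definition pencil :: "'a::field ext set \<Rightarrow> bool" where
  "pencil P \<longleftrightarrow> P \<subseteq> grade 2 \<and> module.subspace (scaleE :: 'a \<Rightarrow> _) P \<and>
     vector_space.dim (scaleE :: 'a \<Rightarrow> _) P = 2"

definition rank2_pencil :: "'a::field ext set \<Rightarrow> bool" where
  "rank2_pencil P \<longleftrightarrow> pencil P \<and> (\<forall>q\<in>P. q \<noteq> 0 \<longrightarrow> rank2_quadric q)"

definition wedge2 :: "'a::field ext set \<Rightarrow> 'a ext set" where
  "wedge2 V = module.span (scaleE :: 'a \<Rightarrow> _) {wedge v w | v w. v \<in> V \<and> w \<in> V}"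

definition alg_closed :: "'a::field itself \<Rightarrow> bool" where
  "alg_closed _ \<longleftrightarrow> (\<forall>p :: 'a poly. degree p > 0 \<longrightarrow> (\<exists>x. poly p x = 0))"

end

theory Submission
  imports Defs
begin


lemma vs_E: "vector_space (scaleE :: 'a::field \<Rightarrow> 'a ext \<Rightarrow> 'a ext)"
  by unfold_locales (simp_all add: scaleE_def fun_eq_iff distrib_left distrib_right mult.assoc)

interpretation E: vector_space "scaleE :: 'a::field \<Rightarrow> 'a ext \<Rightarrow> 'a ext"
  by (rule vs_E)

lemma vs_F: "vector_space ((*) :: 'a::field \<Rightarrow> 'a \<Rightarrow> 'a)"
  by unfold_locales (simp_all add: distrib_left distrib_right mult.assoc)

interpretation EP: vector_space_pair "scaleE :: 'a::field \<Rightarrow> 'a ext \<Rightarrow> 'a ext" "(*) :: 'a \<Rightarrow> 'a \<Rightarrow> 'a"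
  by (intro vector_space_pair.intro vs_E vs_F)

lemma scaleE_apply[simp]: "scaleE c f S = c * f S"
  by (simp add: scaleE_def)

abbreviation top5 :: "nat set" where "top5 \<equiv> {0..<5}"

definition ee :: "nat \<Rightarrow> 'a::field ext" where
  "ee k = (\<lambda>S. if S = {k} then 1 else 0)"

definition one :: "'a::field ext" where
  "one = (\<lambda>S. if S = {} then 1 else 0)"

definition inv :: "nat set \<Rightarrow> nat set \<Rightarrow> nat" where
  "inv S T = card {(s, t). s \<in> S \<and> t \<in> T \<and> t < s}"

lemma wsign_inv: "wsign S T = (-1) ^ inv S T"
  by (simp add: wsign_def inv_def)

lemma inv_single_left: "finite T \<Longrightarrow> inv {i} T = card {t\<in>T. t < i}"
proof -
  assume "finite T"
  have "{(s, t). s \<in> {i} \<and> t \<in> T \<and> t < s} = (\<lambda>t. (i,t)) ` {t\<in>T. t < i}" by auto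
  then show ?thesis unfolding inv_def by (simp add: card_image inj_on_def)
qed

lemma inv_single_right: "finite S \<Longrightarrow> inv S {i} = card {s\<in>S. i < s}"
proof -
  assume "finite S"
  have "{(s, t). s \<in> S \<and> t \<in> {i} \<and> t < s} = (\<lambda>s. (s,i)) ` {s\<in>S. i < s}" by auto
  then show ?thesis unfolding inv_def by (simp add: card_image inj_on_def)
qed

lemma inv_Un_left:
  assumes "finite A" "finite B" "finite C" "A \<inter> B = {}"
  shows "inv (A \<union> B) C = inv A C + inv B C"
proof -
  have eq: "{(s, t). s \<in> A \<union> B \<and> t \<in> C \<and> t < s} =
        {(s, t). s \<in> A \<and> t \<in> C \<and> t < s} \<union> {(s, t). s \<in> B \<and> t \<in> C \<and> t < s}" by auto
  have f1: "finite {(s, t). s \<in> A \<and> t \<in> C \<and> t < s}"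
    by (rule finite_subset[of _ "A \<times> C"]) (use assms in auto)
  have f2: "finite {(s, t). s \<in> B \<and> t \<in> C \<and> t < s}"
    by (rule finite_subset[of _ "B \<times> C"]) (use assms in auto)
  show ?thesis unfolding inv_def eq
    by (rule card_Un_disjoint[OF f1 f2]) (use assms in auto)
qed

lemma inv_Un_right:
  assumes "finite A" "finite B" "finite C" "B \<inter> C = {}"
  shows "inv A (B \<union> C) = inv A B + inv A C"
proof -
  have eq: "{(s, t). s \<in> A \<and> t \<in> B \<union> C \<and> t < s} =
        {(s, t). s \<in> A \<and> t \<in> B \<and> t < s} \<union> {(s, t). s \<in> A \<and> t \<in> C \<and> t < s}" by auto
  have f1: "finite {(s, t). s \<in> A \<and> t \<in> B \<and> t < s}"
    by (rule finite_subset[of _ "A \<times> B"]) (use assms in auto)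
  have f2: "finite {(s, t). s \<in> A \<and> t \<in> C \<and> t < s}"
    by (rule finite_subset[of _ "A \<times> C"]) (use assms in auto)
  show ?thesis unfolding inv_def eq
    by (rule card_Un_disjoint[OF f1 f2]) (use assms in auto)
qed

lemma wsign_assoc:
  assumes "finite A" "finite B" "finite C" "A \<inter> B = {}" "A \<inter> C = {}" "B \<inter> C = {}"
  shows "(wsign A B :: 'a::field) * wsign (A \<union> B) C = wsign B C * wsign A (B \<union> C)"
  unfolding wsign_inv inv_Un_left[OF assms(1,2,3,4)] inv_Un_right[OF assms(1,2,3,6)] power_add
  by (simp only: ac_simps)

lemma wsign_sq: "(wsign A B :: 'a::field) * wsign A B = 1"
  unfolding wsign_inv by (simp add: power_mult_distrib[symmetric])

lemma wedge_assoc: "wedge (wedge f g) h = wedge f (wedge g (h :: 'a::field ext))"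
proof (rule ext)
  fix U :: "nat set"
  show "wedge (wedge f g) h U = wedge f (wedge g h) U"
  proof (cases "U \<subseteq> top5")
    case False
    then show ?thesis by (simp add: wedge_def)
  next
    case True
    have fU: "finite U" using True finite_subset by blast
    have L: "wedge (wedge f g) h U =
      (\<Sum>(S,A)\<in>Sigma (Pow U) Pow. f A * g (S - A) * h (U - S) * (wsign A (S - A) * wsign S (U - S)))"
    proof -
      have "wedge (wedge f g) h U = (\<Sum>S\<in>Pow U. (\<Sum>A\<in>Pow S. f A * g (S - A) * wsign A (S - A)) * h (U - S) * wsign S (U - S))"
      proof -
                show ?thesis
          apply (simp add: wedge_def True)
          apply (intro sum.cong refl)
          using True by auto
      qed
      also have "\<dots> = (\<Sum>S\<in>Pow U. \<Sum>A\<in>Pow S. f A * g (S - A) * h (U - S) * (wsign A (S - A) * wsign S (U - S)))"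
        by (simp only: sum_distrib_right sum_distrib_left mult_ac)
      also have "\<dots> = (\<Sum>(S,A)\<in>Sigma (Pow U) Pow. f A * g (S - A) * h (U - S) * (wsign A (S - A) * wsign S (U - S)))"
        by (rule sum.Sigma) (use fU in \<open>auto intro: finite_subset\<close>)
      finally show ?thesis .
    qed
    have R: "wedge f (wedge g h) U =
      (\<Sum>(A,B)\<in>Sigma (Pow U) (\<lambda>A. Pow (U - A)). f A * g B * h (U - A - B) * (wsign B (U - A - B) * wsign A (U - A)))"
    proof -
      have "wedge f (wedge g h) U = (\<Sum>A\<in>Pow U. f A * (\<Sum>B\<in>Pow (U - A). g B * h (U - A - B) * wsign B (U - A - B)) * wsign A (U - A))"
      proof -
                show ?thesis
          apply (simp add: wedge_def True)
          apply (intro sum.cong refl)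
          using True by auto
      qed
      also have "\<dots> = (\<Sum>A\<in>Pow U. \<Sum>B\<in>Pow (U - A). f A * g B * h (U - A - B) * (wsign B (U - A - B) * wsign A (U - A)))"
        by (simp only: sum_distrib_right sum_distrib_left mult_ac)
      also have "\<dots> = (\<Sum>(A,B)\<in>Sigma (Pow U) (\<lambda>A. Pow (U - A)). f A * g B * h (U - A - B) * (wsign B (U - A - B) * wsign A (U - A)))"
        by (rule sum.Sigma) (use fU in \<open>auto intro: finite_subset\<close>)
      finally show ?thesis .
    qed
    have "(\<Sum>(S,A)\<in>Sigma (Pow U) Pow. f A * g (S - A) * h (U - S) * (wsign A (S - A) * wsign S (U - S))) =
          (\<Sum>(A,B)\<in>Sigma (Pow U) (\<lambda>A. Pow (U - A)). f A * g B * h (U - A - B) * (wsign B (U - A - B) * wsign A (U - A)))"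
    proof (rule sum.reindex_bij_witness[where i = "\<lambda>(A,B). (A \<union> B, A)" and j = "\<lambda>(S,A). (A, S - A)"])
      fix a assume "a \<in> Sigma (Pow U) (\<lambda>A. Pow (U - A))"
      then show "(case (case a of (A, B) \<Rightarrow> (A \<union> B, A)) of (S, A) \<Rightarrow> (A, S - A)) = a" by auto
    next
      fix a assume "a \<in> Sigma (Pow U) (\<lambda>A. Pow (U - A))"
      then show "(case a of (A, B) \<Rightarrow> (A \<union> B, A)) \<in> Sigma (Pow U) Pow" by auto
    next
      fix a assume "a \<in> Sigma (Pow U) Pow"
      then show "(case (case a of (S, A) \<Rightarrow> (A, S - A)) of (A, B) \<Rightarrow> (A \<union> B, A)) = a" by auto
    next
      fix a assume "a \<in> Sigma (Pow U) Pow"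
      then show "(case a of (S, A) \<Rightarrow> (A, S - A)) \<in> Sigma (Pow U) (\<lambda>A. Pow (U - A))" by auto
    next
      fix a assume a: "a \<in> Sigma (Pow U) Pow"
      obtain S A where a_eq: "a = (S, A)" by (cases a)
      with a have SU: "S \<subseteq> U" and AS: "A \<subseteq> S" by auto
      have e1: "U - A - (S - A) = U - S" using SU AS by auto
      have e2: "A \<union> (S - A) = S" using AS by auto
      have e3: "(S - A) \<union> (U - S) = U - A" using SU AS by auto
      have fS: "finite S" using fU SU finite_subset by blast
      have fA: "finite A" using fS AS finite_subset by blast
      have sg: "(wsign A (S - A) :: 'a) * wsign S (U - S) = wsign (S - A) (U - S) * wsign A (U - A)"
        using wsign_assoc[of A "S - A" "U - S", OF fA _ _] fS fU e2 e3 by auto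
      show "(case (case a of (S, A) \<Rightarrow> (A, S - A)) of (A, B) \<Rightarrow> f A * g B * h (U - A - B) * (wsign B (U - A - B) * wsign A (U - A))) =
            (case a of (S, A) \<Rightarrow> f A * g (S - A) * h (U - S) * (wsign A (S - A) * wsign S (U - S)))"
        unfolding a_eq using e1 sg by simp
    qed
    then show ?thesis using L R by simp
  qed
qed


lemma wedge_add_left: "wedge (f + g) h = wedge f h + wedge g (h::'a::field ext)"
  unfolding fun_eq_iff wedge_def plus_fun_apply by (simp only: distrib_right sum.distrib if_distrib) simp
lemma wedge_add_right: "wedge h (f + g) = wedge h f + wedge h (g::'a::field ext)"
  unfolding fun_eq_iff wedge_def plus_fun_apply by (simp only: distrib_left distrib_right sum.distrib if_distrib) simp
lemma wedge_scale_left: "wedge (scaleE c f) h = scaleE c (wedge f (h::'a::field ext))"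
  unfolding fun_eq_iff wedge_def scaleE_apply by (simp only: sum_distrib_left mult_ac if_distrib) simp
lemma wedge_scale_right: "wedge h (scaleE c f) = scaleE c (wedge h (f::'a::field ext))"
  unfolding fun_eq_iff wedge_def scaleE_apply by (simp only: sum_distrib_left mult_ac if_distrib) simp

lemma linear_wedge_left: "Vector_Spaces.linear scaleE scaleE (\<lambda>f. wedge f (h::'a::field ext))"
  by (simp add: Vector_Spaces.linear_iff vs_E wedge_add_left wedge_scale_left)
lemma linear_wedge_right: "Vector_Spaces.linear scaleE scaleE (\<lambda>f. wedge (h::'a::field ext) f)"
  by (simp add: Vector_Spaces.linear_iff vs_E wedge_add_right wedge_scale_right)

lemma wedge_zero_left[simp]: "wedge 0 h = (0::'a::field ext)"
  by (simp add: wedge_def fun_eq_iff)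
lemma wedge_zero_right[simp]: "wedge h 0 = (0::'a::field ext)"
  by (simp add: wedge_def fun_eq_iff)
lemma wedge_zero_left'[simp]: "wedge (\<lambda>S. 0) h = (0::'a::field ext)"
  by (simp add: wedge_def fun_eq_iff)
lemma wedge_zero_right'[simp]: "wedge h (\<lambda>S. 0) = (0::'a::field ext)"
  by (simp add: wedge_def fun_eq_iff)

lemma wedge_minus_left: "wedge (- f) h = - wedge f (h::'a::field ext)"
  by (auto simp: wedge_def fun_eq_iff sum_negf)
lemma wedge_minus_right: "wedge h (- f) = - wedge h (f::'a::field ext)"
  by (auto simp: wedge_def fun_eq_iff sum_negf)
lemma wedge_diff_left: "wedge (f - g) h = wedge f h - wedge g (h::'a::field ext)"
  by (simp only: diff_conv_add_uminus wedge_add_left wedge_minus_left)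
lemma wedge_diff_right: "wedge h (f - g) = wedge h f - wedge h (g::'a::field ext)"
  by (simp only: diff_conv_add_uminus wedge_add_right wedge_minus_right)

lemma wedge_sum_left: "wedge (\<Sum>i\<in>A. F i) h = (\<Sum>i\<in>A. wedge (F i) (h::'a::field ext))"
proof (induct A rule: infinite_finite_induct)
  case (insert x B) then show ?case by (simp only: sum.insert[OF insert(1,2)] wedge_add_left insert(3))
qed simp_all
lemma wedge_sum_right: "wedge h (\<Sum>i\<in>A. F i) = (\<Sum>i\<in>A. wedge h (F i::'a::field ext))"
proof (induct A rule: infinite_finite_induct)
  case (insert x B) then show ?case by (simp only: sum.insert[OF insert(1,2)] wedge_add_right insert(3))
qed simp_all

lemma grade_extAlg: "f \<in> grade d \<Longrightarrow> f \<in> extAlg"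
  by (auto simp: grade_def extAlg_def)

lemma support_subspace: "E.subspace {f :: 'a::field ext. \<forall>S. f S \<noteq> 0 \<longrightarrow> P S}"
  unfolding E.subspace_def
proof (intro conjI ballI allI)
  show "0 \<in> {f :: 'a::field ext. \<forall>S. f S \<noteq> 0 \<longrightarrow> P S}" by simp
  fix x y :: "'a ext" and c :: 'a
  assume x: "x \<in> {f. \<forall>S. f S \<noteq> 0 \<longrightarrow> P S}"
  then show "scaleE c x \<in> {f. \<forall>S. f S \<noteq> 0 \<longrightarrow> P S}" by simp
  assume y: "y \<in> {f. \<forall>S. f S \<noteq> 0 \<longrightarrow> P S}"
  show "x + y \<in> {f. \<forall>S. f S \<noteq> 0 \<longrightarrow> P S}"
  proof (clarify)
    fix S assume "(x + y) S \<noteq> 0"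
    then have "x S \<noteq> 0 \<or> y S \<noteq> 0" by (auto simp: plus_fun_apply)
    then show "P S" using x y by blast
  qed
qed

lemma grade_subspace: "E.subspace (grade d)"
  unfolding grade_def by (rule support_subspace)

lemma extAlg_subspace: "E.subspace extAlg"
  unfolding extAlg_def by (rule support_subspace)

lemma grade_zero_outside: "f \<in> grade d \<Longrightarrow> \<not> (S \<subseteq> top5 \<and> card S = d) \<Longrightarrow> f S = 0"
  by (auto simp: grade_def)

lemma wedge_grade:
  assumes "f \<in> grade d" "g \<in> grade d'"
  shows "wedge f g \<in> grade (d + d')"
  unfolding grade_def
proof (clarify)
  fix U assume ne: "wedge f g U \<noteq> 0"
  then have U: "U \<subseteq> top5" by (auto simp: wedge_def split: if_splits)
  then have fU: "finite U" using finite_subset by blast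
  have "(\<Sum>S\<in>Pow U. f S * g (U - S) * wsign S (U - S)) \<noteq> 0"
    using ne unfolding wedge_def if_P[OF U] .
  then obtain S where S: "S \<in> Pow U" "f S * g (U - S) * wsign S (U - S) \<noteq> 0"
    by (rule sum.not_neutral_contains_not_neutral)
  then have "f S \<noteq> 0" "g (U - S) \<noteq> 0" by auto
  with assms have "card S = d" "card (U - S) = d'" by (auto simp: grade_def)
  moreover have "card U = card S + card (U - S)"
    using S fU by (metis PowD card_Diff_subset card_mono diff_add_inverse le_add_diff_inverse finite_subset)
  ultimately show "U \<subseteq> top5 \<and> card U = d + d'" using U by simp
qed

lemma wedge_grade11: "l \<in> grade 1 \<Longrightarrow> m \<in> grade 1 \<Longrightarrow> wedge l m \<in> grade 2"
  using wedge_grade[of l 1 m 1] by (simp only: one_add_one)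

lemma grade1_support: "l \<in> grade 1 \<Longrightarrow> l S \<noteq> 0 \<Longrightarrow> \<exists>i<5. S = {i}"
  by (auto simp: grade_def card_Suc_eq)

lemma wedge_grade1_left:
  assumes l: "l \<in> grade 1"
  shows "wedge l f U = (if U \<subseteq> top5 then (\<Sum>i\<in>U. l {i} * f (U - {i}) * wsign {i} (U - {i})) else 0)"
proof (cases "U \<subseteq> top5")
  case True
  have fU: "finite U" using True finite_subset by blast
  have "(\<Sum>S\<in>Pow U. l S * f (U - S) * wsign S (U - S)) = (\<Sum>S\<in>(\<lambda>i. {i}) ` U. l S * f (U - S) * wsign S (U - S))"
  proof (rule sum.mono_neutral_right)
    show "finite (Pow U)" using fU by simp
    show "(\<lambda>i. {i}) ` U \<subseteq> Pow U" by auto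
    show "\<forall>S\<in>Pow U - (\<lambda>i. {i}) ` U. l S * f (U - S) * wsign S (U - S) = 0"
      using grade1_support[OF l] by fastforce
  qed
  also have "\<dots> = (\<Sum>i\<in>U. l {i} * f (U - {i}) * wsign {i} (U - {i}))"
    by (subst sum.reindex) (auto simp: inj_on_def)
  finally show ?thesis using True by (simp add: wedge_def)
qed (simp add: wedge_def)

lemma wedge_grade1_right:
  assumes l: "l \<in> grade 1"
  shows "wedge f l U = (if U \<subseteq> top5 then (\<Sum>i\<in>U. f (U - {i}) * l {i} * wsign (U - {i}) {i}) else 0)"
proof (cases "U \<subseteq> top5")
  case True
  have fU: "finite U" using True finite_subset by blast
  have "(\<Sum>S\<in>Pow U. f S * l (U - S) * wsign S (U - S)) = (\<Sum>S\<in>(\<lambda>i. U - {i}) ` U. f S * l (U - S) * wsign S (U - S))"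
  proof (rule sum.mono_neutral_right)
    show "finite (Pow U)" using fU by simp
    show "(\<lambda>i. U - {i}) ` U \<subseteq> Pow U" by auto
    show "\<forall>S\<in>Pow U - (\<lambda>i. U - {i}) ` U. f S * l (U - S) * wsign S (U - S) = 0"
    proof
      fix S assume S: "S \<in> Pow U - (\<lambda>i. U - {i}) ` U"
      show "f S * l (U - S) * wsign S (U - S) = 0"
      proof (rule ccontr)
        assume "f S * l (U - S) * wsign S (U - S) \<noteq> 0"
        then have "l (U - S) \<noteq> 0" by auto
        then obtain i where "U - S = {i}" using grade1_support[OF l] by blast
        then have "S = U - {i}" "i \<in> U" using S by auto
        then show False using S by auto
      qed
    qed
  qed
  also have "\<dots> = (\<Sum>i\<in>U. f (U - {i}) * l {i} * wsign (U - {i}) {i})"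
  proof (subst sum.reindex)
    show "inj_on (\<lambda>i. U - {i}) U" by (auto simp: inj_on_def)
    have "\<And>i. i \<in> U \<Longrightarrow> U - (U - {i}) = {i}" by auto
    then show "sum ((\<lambda>S. f S * l (U - S) * wsign S (U - S)) \<circ> (\<lambda>i. U - {i})) U =
               (\<Sum>i\<in>U. f (U - {i}) * l {i} * wsign (U - {i}) {i})" by (intro sum.cong) auto
  qed
  finally show ?thesis using True by (simp add: wedge_def)
qed (simp add: wedge_def)

lemma wsign_single_left: "finite T \<Longrightarrow> wsign {i} T = (-1) ^ card {t\<in>T. t < i}"
  by (simp add: wsign_inv inv_single_left)
lemma wsign_single_right: "finite S \<Longrightarrow> wsign S {i} = (-1) ^ card {s\<in>S. i < s}"
  by (simp add: wsign_inv inv_single_right)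

lemma wedge_grade1_comm:
  assumes l: "l \<in> grade 1" and f: "f \<in> grade d"
  shows "wedge l f = scaleE ((-1)^d) (wedge f l)"
proof (rule ext)
  fix U
  show "wedge l f U = scaleE ((-1)^d) (wedge f l) U"
  proof (cases "U \<subseteq> top5")
    case True
    have fU: "finite U" using True finite_subset by blast
    have "(\<Sum>i\<in>U. l {i} * f (U - {i}) * wsign {i} (U - {i})) = 
          (-1)^d * (\<Sum>i\<in>U. f (U - {i}) * l {i} * wsign (U - {i}) {i})"
      unfolding sum_distrib_left
    proof (rule sum.cong[OF refl])
      fix i assume i: "i \<in> U"
      show "l {i} * f (U - {i}) * wsign {i} (U - {i}) = (-1)^d * (f (U - {i}) * l {i} * wsign (U - {i}) {i})"
      proof (cases "f (U - {i}) = 0")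
        case False
        then have cd: "card (U - {i}) = d" using f by (auto simp: grade_def)
        have part: "U - {i} = {t\<in>U - {i}. t < i} \<union> {s\<in>U - {i}. i < s}" by auto
        have "card (U - {i}) = card {t\<in>U - {i}. t < i} + card {s\<in>U - {i}. i < s}"
          by (subst part, rule card_Un_disjoint) (use fU in auto)
        then have "(-1::'a)^card {t\<in>U - {i}. t < i} = (-1)^d * (-1)^card {s\<in>U - {i}. i < s}"
          using cd by (simp add: power_add[symmetric] mult_2[symmetric] power_mult)
             (metis (no_types, lifting) add.commute left_minus_one_mult_self power_add)
        then show ?thesis using fU by (simp add: wsign_single_left wsign_single_right)
      qed simp
    qed
    then show ?thesis using True by (simp add: wedge_grade1_left[OF l] wedge_grade1_right[OF l])
  qed (simp add: wedge_def)
qed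


lemma sum_fun_apply: "(\<Sum>i\<in>A. F i) x = (\<Sum>i\<in>A. F i x)"
  by (induct A rule: infinite_finite_induct) auto

lemma ee_grade: "k < 5 \<Longrightarrow> ee k \<in> grade 1"
  by (auto simp: ee_def grade_def split: if_splits)

lemma ee_single[simp]: "ee k {i} = (if k = i then 1 else 0)"
  by (auto simp: ee_def)

lemma wedge_ee_left:
  assumes "i < 5"
  shows "wedge (ee i) f U = (if U \<subseteq> top5 \<and> i \<in> U then f (U - {i}) * wsign {i} (U - {i}) else 0)"
proof (cases "U \<subseteq> top5")
  case True
  then have fU: "finite U" using finite_subset by blast
  have "(\<Sum>j\<in>U. ee i {j} * f (U - {j}) * wsign {j} (U - {j})) = 
        (\<Sum>j\<in>U. if j = i then f (U - {i}) * wsign {i} (U - {i}) else 0)"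
    by (intro sum.cong) auto
  also have "\<dots> = (if i \<in> U then f (U - {i}) * wsign {i} (U - {i}) else 0)"
    using fU by (simp add: sum.delta')
  finally show ?thesis using True by (simp add: wedge_grade1_left[OF ee_grade[OF assms]])
qed (simp add: wedge_def)

lemma grade1_eq:
  assumes "l \<in> grade 1"
  shows "l = (\<Sum>k\<in>top5. scaleE (l {k}) (ee k))"
proof (rule ext)
  fix S
  have "(\<Sum>k\<in>top5. scaleE (l {k}) (ee k)) S = (\<Sum>k\<in>top5. if S = {k} then l {k} else 0)"
    by (auto simp: sum_fun_apply ee_def intro!: sum.cong)
  also have "\<dots> = l S"
  proof (cases "\<exists>k<5. S = {k}")
    case True
    then obtain k where k: "k < 5" "S = {k}" by blast
    have "(\<Sum>j\<in>top5. if S = {j} then l {j} else 0) = (\<Sum>j\<in>top5. if j = k then l {k} else 0)"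
      by (intro sum.cong) (auto simp: k)
    then show ?thesis using k by simp
  next
    case False
    then have "l S = 0" using grade1_support[OF assms] by blast
    then show ?thesis using False by (auto intro!: sum.neutral)
  qed
  finally show "l S = (\<Sum>k\<in>top5. scaleE (l {k}) (ee k)) S" by simp
qed

definition ev :: "(nat \<Rightarrow> 'a) \<Rightarrow> 'a::field ext \<Rightarrow> 'a" where
  "ev \<phi> l = (\<Sum>k\<in>top5. \<phi> k * l {k})"

lemma ev_add: "ev \<phi> (f + g) = ev \<phi> f + ev \<phi> g"
  unfolding ev_def plus_fun_apply by (simp only: distrib_left sum.distrib)
lemma ev_scale: "ev \<phi> (scaleE c f) = c * ev \<phi> f"
  unfolding ev_def scaleE_apply by (simp only: sum_distrib_left mult_ac)
lemma ev_zero[simp]: "ev \<phi> 0 = 0"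
  by (simp add: ev_def)
lemma ev_minus: "ev \<phi> (- f) = - ev \<phi> f"
  by (simp add: ev_def sum_negf)
lemma ev_diff: "ev \<phi> (f - g) = ev \<phi> f - ev \<phi> g"
  by (simp only: diff_conv_add_uminus ev_add ev_minus)
lemma ev_ee: "k < 5 \<Longrightarrow> ev \<phi> (ee k) = \<phi> k"
  by (simp add: ev_def if_distrib cong: if_cong)

lemma wedge_one_right: "f \<in> extAlg \<Longrightarrow> wedge f one = f"
proof (rule ext)
  fix U assume f: "f \<in> extAlg"
  show "wedge f one U = f U"
  proof (cases "U \<subseteq> top5")
    case True
    then have fU: "finite U" using finite_subset by blast
    have "(\<Sum>S\<in>Pow U. f S * one (U - S) * wsign S (U - S)) = (\<Sum>S\<in>Pow U. if S = U then f U * wsign U {} else 0)"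
      by (intro sum.cong) (auto simp: one_def)
    also have "\<dots> = f U" using fU by (simp add: wsign_inv inv_def)
    finally show ?thesis using True by (simp add: wedge_def)
  next
    case False
    then show ?thesis using f by (auto simp: wedge_def extAlg_def)
  qed
qed

lemma wedge_one_left: "f \<in> extAlg \<Longrightarrow> wedge one f = f"
proof (rule ext)
  fix U assume f: "f \<in> extAlg"
  show "wedge one f U = f U"
  proof (cases "U \<subseteq> top5")
    case True
    then have fU: "finite U" using finite_subset by blast
    have "(\<Sum>S\<in>Pow U. one S * f (U - S) * wsign S (U - S)) = (\<Sum>S\<in>Pow U. if S = {} then f U * wsign {} U else 0)"
      by (intro sum.cong) (auto simp: one_def)
    also have "\<dots> = f U" using fU by (simp add: wsign_inv inv_def)
    finally show ?thesis using True by (simp add: wedge_def)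
  next
    case False
    then show ?thesis using f by (auto simp: wedge_def extAlg_def)
  qed
qed

lemma wedge11:
  assumes l: "l \<in> grade 1" and m: "m \<in> grade 1" and ij: "i < j" "j < 5"
  shows "wedge l m {i, j} = l {i} * m {j} - l {j} * m {i}"
proof -
  have s: "{i, j} \<subseteq> top5" using ij by auto
  have d1: "{i, j} - {i} = {j}" and d2: "{i, j} - {j} = {i}" using ij by auto
  have e1: "{t\<in>{j}. t < i} = {}" and e2: "{t\<in>{i}. t < j} = {i}" using ij by auto
  have w1: "wsign {i} {j} = (1::'a)"
    by (simp only: wsign_single_left[OF finite.insertI[OF finite.emptyI]] e1 card.empty power_0)
  have w2: "wsign {j} {i} = (-1::'a)"
    by (simp only: wsign_single_left[OF finite.insertI[OF finite.emptyI]] e2) simp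
  show ?thesis using ij
    by (simp add: wedge_grade1_left[OF l] s d1 d2 w1 w2)
qed

lemma grade2_support:
  assumes "f \<in> grade 2" "f U \<noteq> 0"
  shows "\<exists>i j. i < j \<and> j < 5 \<and> U = {i, j}"
proof -
  from assms have U: "U \<subseteq> top5" "card U = 2" by (auto simp: grade_def)
  then obtain a b where ab: "U = {a, b}" "a \<noteq> b" by (auto simp: card_2_iff)
  show ?thesis
  proof (cases "a < b")
    case True then show ?thesis using ab U by (intro exI[of _ a] exI[of _ b]) auto
  next
    case False then show ?thesis using ab U by (intro exI[of _ b] exI[of _ a]) auto
  qed
qed

lemma wedge_self_grade1:
  assumes l: "l \<in> grade 1"
  shows "wedge l l = 0"
proof (rule ext)
  fix U
  show "wedge l l U = 0 U"
  proof (cases "wedge l l U = 0")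
    case False
    then obtain i j where "i < j" "j < 5" "U = {i, j}"
      using grade2_support[OF wedge_grade11[OF l l] False] by blast
    then show ?thesis using wedge11[OF l l] by (simp add: mult.commute)
  qed simp
qed

lemma wedge_anticomm:
  assumes l: "l \<in> grade 1" and m: "m \<in> grade 1"
  shows "wedge l m = - wedge m l"
  using wedge_grade1_comm[OF l m] by (simp add: fun_eq_iff)

lemma wedge_comm2:
  assumes l: "l \<in> grade 1" and f: "f \<in> grade 2"
  shows "wedge l f = wedge f l"
  using wedge_grade1_comm[OF l f] by (simp add: fun_eq_iff)


section \<open>Standard basis and dimensions\<close>

definition delta :: "nat set \<Rightarrow> 'a::field ext" where
  "delta S = (\<lambda>T. if T = S then 1 else 0)"

definition Pd :: "nat \<Rightarrow> nat set set" where
  "Pd d = {S. S \<subseteq> top5 \<and> card S = d}"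

lemma finite_Pd: "finite (Pd d)"
  by (rule finite_subset[of _ "Pow top5"]) (auto simp: Pd_def)

lemma card_Pd: "card (Pd d) = 5 choose d"
  unfolding Pd_def using n_subsets[of top5 d] by simp

lemma delta_grade: "S \<in> Pd d \<Longrightarrow> delta S \<in> grade d"
  by (auto simp: delta_def grade_def Pd_def)

lemma grade_expand:
  assumes "f \<in> grade d"
  shows "f = (\<Sum>S\<in>Pd d. scaleE (f S) (delta S))"
proof (rule ext)
  fix T
  have "(\<Sum>S\<in>Pd d. scaleE (f S) (delta S)) T = (\<Sum>S\<in>Pd d. if S = T then f T else 0)"
    by (simp add: sum_fun_apply delta_def) (intro sum.cong, auto)
  also have "\<dots> = f T"
    using finite_Pd[of d] assms by (auto simp: sum.delta Pd_def grade_def)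
  finally show "f T = (\<Sum>S\<in>Pd d. scaleE (f S) (delta S)) T" by simp
qed

lemma delta_inj: "inj (delta :: nat set \<Rightarrow> 'a::field ext)"
  by (auto simp: inj_on_def delta_def fun_eq_iff split: if_splits)

lemma delta_indep: "\<not> E.dependent ((delta :: nat set \<Rightarrow> 'a::field ext) ` A)" if "finite A"
proof
  assume "E.dependent ((delta :: nat set \<Rightarrow> 'a::field ext) ` A)"
  then have "\<exists>u. (\<exists>v\<in>delta ` A. u v \<noteq> (0::'a)) \<and> (\<Sum>v\<in>(delta :: nat set \<Rightarrow> 'a ext) ` A. scaleE (u v) v) = 0"
    using E.dependent_finite[of "delta ` A"] that by blast
  then obtain u where u: "\<exists>v\<in>delta ` A. u v \<noteq> (0::'a)" "(\<Sum>v\<in>(delta :: nat set \<Rightarrow> 'a ext) ` A. scaleE (u v) v) = 0"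
    by blast
  from u(1) obtain S where S: "S \<in> A" "u (delta S) \<noteq> 0" by auto
  have "0 = (\<Sum>v\<in>(delta :: nat set \<Rightarrow> 'a ext) ` A. scaleE (u v) v) S" using u(2) by simp
  also have "\<dots> = (\<Sum>T\<in>A. u (delta T) * delta T S)"
    by (simp add: sum_fun_apply sum.reindex[OF inj_on_subset[OF delta_inj]])
  also have "\<dots> = (\<Sum>T\<in>A. if T = S then u (delta S) else 0)"
    by (intro sum.cong) (auto simp: delta_def)
  also have "\<dots> = u (delta S)" using S that by simp
  finally show False using S by simp
qed

lemma dim_grade: "E.dim (grade d :: 'a::field ext set) = 5 choose d"
proof -
  have "E.dim (grade d :: 'a ext set) = card ((delta :: nat set \<Rightarrow> 'a ext) ` Pd d)"
  proof (rule E.dim_unique)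
    show "(delta :: nat set \<Rightarrow> 'a ext) ` Pd d \<subseteq> grade d" using delta_grade by blast
    show "grade d \<subseteq> E.span ((delta :: nat set \<Rightarrow> 'a ext) ` Pd d)"
    proof
      fix f :: "'a ext" assume f: "f \<in> grade d"
      have "(\<Sum>S\<in>Pd d. scaleE (f S) (delta S)) \<in> E.span (delta ` Pd d)"
        by (intro E.span_sum E.span_scale E.span_base) auto
      then show "f \<in> E.span (delta ` Pd d)" using grade_expand[OF f] by simp
    qed
    show "\<not> E.dependent ((delta :: nat set \<Rightarrow> 'a ext) ` Pd d)" by (rule delta_indep[OF finite_Pd])
  qed simp
  also have "\<dots> = 5 choose d" using card_Pd by (simp add: card_image inj_on_subset[OF delta_inj])
  finally show ?thesis .
qed

lemma delta_single: "delta {k} = ee k"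
  by (simp add: delta_def ee_def)

lemma delta_pair:
  assumes "i < j" "j < 5"
  shows "delta {i, j} = (wedge (ee i) (ee j) :: 'a::field ext)"
proof (rule ext)
  fix U
  show "delta {i, j} U = (wedge (ee i) (ee j) :: 'a::field ext) U"
  proof (cases "\<exists>a b. a < b \<and> b < 5 \<and> U = {a, b}")
    case True
    then obtain a b where ab: "a < b" "b < 5" "U = {a, b}" by blast
    have "wedge (ee i) (ee j) U = (ee i {a} * ee j {b} - ee i {b} * ee j {a} :: 'a)"
      using wedge11[OF ee_grade ee_grade ab(1,2), of i j] assms ab by simp
    also have "\<dots> = delta {i, j} U" using assms ab
      by (auto simp: delta_def doubleton_eq_iff)
    finally show ?thesis by simp
  next
    case False
    then have "(wedge (ee i) (ee j) :: 'a ext) U = 0"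
      using grade2_support[OF wedge_grade11[OF ee_grade ee_grade], of i j U] assms by auto
    moreover have "delta {i, j} U = (0::'a)" using False assms by (auto simp: delta_def)
    ultimately show ?thesis by simp
  qed
qed

definition G2 :: "'a::field ext set" where
  "G2 = {wedge (ee i) (ee j) | i j. i < 5 \<and> j < 5}"

lemma grade2_span: "grade 2 \<subseteq> E.span (G2 :: 'a::field ext set)"
proof
  fix f :: "'a ext" assume f: "f \<in> grade 2"
  have "delta ` Pd 2 \<subseteq> (G2 :: 'a ext set)"
  proof
    fix x assume "x \<in> (delta ` Pd 2 :: 'a ext set)"
    then obtain S where S: "S \<in> Pd 2" "x = delta S" by auto
    then have "S \<subseteq> top5" "card S = 2" by (auto simp: Pd_def)
    then obtain a b where ab: "S = {a, b}" "a \<noteq> b" "a < 5" "b < 5" by (auto simp: card_2_iff)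
    show "x \<in> G2"
    proof (cases "a < b")
      case True
      have "x = wedge (ee a) (ee b)" using S(2) ab(1) delta_pair[OF True ab(4)] by simp
      then show ?thesis unfolding G2_def using ab by blast
    next
      case False then have "S = {b, a}" "b < a" using ab by auto
      then have "x = wedge (ee b) (ee a)" using S(2) delta_pair[of b a] ab by simp
      then show ?thesis unfolding G2_def using ab by blast
    qed
  qed
  moreover have "(\<Sum>S\<in>Pd 2. scaleE (f S) (delta S)) \<in> E.span (delta ` Pd 2)"
    by (intro E.span_sum E.span_scale E.span_base) auto
  ultimately show "f \<in> E.span G2" using grade_expand[OF f] E.span_mono[of "delta ` Pd 2" G2] by auto
qed

lemma G2_grade: "G2 \<subseteq> grade 2"
  using wedge_grade11[OF ee_grade ee_grade] by (auto simp: G2_def)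

lemma grade2_induct:
  assumes "f \<in> grade 2" "E.subspace P" "\<And>i j. i < 5 \<Longrightarrow> j < 5 \<Longrightarrow> wedge (ee i) (ee j) \<in> P"
  shows "f \<in> P"
proof -
  have "G2 \<subseteq> P" using assms(3) by (auto simp: G2_def)
  then have "E.span G2 \<subseteq> P" using E.span_minimal assms(2) by blast
  then show ?thesis using grade2_span assms(1) by blast
qed


section \<open>Contraction\<close>

definition sg :: "nat \<Rightarrow> nat set \<Rightarrow> 'a::field" where
  "sg k S = (-1) ^ card {s\<in>S. s < k}"

definition iota :: "(nat \<Rightarrow> 'a) \<Rightarrow> 'a::field ext \<Rightarrow> 'a ext" where
  "iota \<phi> f = (\<lambda>S. if S \<subseteq> top5 then (\<Sum>k\<in>top5 - S. \<phi> k * sg k S * f (insert k S)) else 0)"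

lemma iota_add: "iota \<phi> (f + g) = iota \<phi> f + iota \<phi> g"
  unfolding fun_eq_iff iota_def plus_fun_apply by (simp only: distrib_left sum.distrib if_distrib) simp
lemma iota_scale: "iota \<phi> (scaleE c f) = scaleE c (iota \<phi> f)"
  unfolding fun_eq_iff iota_def scaleE_apply by (simp only: sum_distrib_left mult_ac if_distrib) simp
lemma iota_zero[simp]: "iota \<phi> 0 = 0"
  by (auto simp: iota_def fun_eq_iff)
lemma iota_minus: "iota \<phi> (- f) = - iota \<phi> f"
  by (auto simp: iota_def fun_eq_iff sum_negf)
lemma iota_diff: "iota \<phi> (f - g) = iota \<phi> f - iota \<phi> g"
  by (simp only: diff_conv_add_uminus iota_add iota_minus)
lemma linear_iota: "Vector_Spaces.linear scaleE scaleE (iota \<phi> :: 'a::field ext \<Rightarrow> _)"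
  by (simp add: Vector_Spaces.linear_iff vs_E iota_add iota_scale)

lemma iota_grade:
  assumes "f \<in> grade (Suc d)"
  shows "iota \<phi> f \<in> grade d"
  unfolding grade_def
proof clarify
  fix S assume ne: "iota \<phi> f S \<noteq> 0"
  then have S: "S \<subseteq> top5" by (auto simp: iota_def split: if_splits)
  then have fS: "finite S" using finite_subset by blast
  have "(\<Sum>k\<in>top5 - S. \<phi> k * sg k S * f (insert k S)) \<noteq> 0"
    using ne unfolding iota_def if_P[OF S] .
  then obtain k where k: "k \<in> top5 - S" "\<phi> k * sg k S * f (insert k S) \<noteq> 0"
    by (rule sum.not_neutral_contains_not_neutral)
  then have k: "k \<in> top5 - S" "f (insert k S) \<noteq> 0" by auto
  then have "card (insert k S) = Suc d" using assms by (auto simp: grade_def)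
  then have "card S = d" using k fS by simp
  then show "S \<subseteq> top5 \<and> card S = d" using S by simp
qed

lemma iota_grade2: "p \<in> grade 2 \<Longrightarrow> iota \<phi> p \<in> grade 1"
  using iota_grade[of p "Suc 0" \<phi>] by (simp add: numeral_2_eq_2)

lemma iota_extAlg: "iota \<phi> f \<in> extAlg"
  by (auto simp: iota_def extAlg_def)

lemma iota_grade1:
  assumes l: "l \<in> grade 1"
  shows "iota \<phi> l = scaleE (ev \<phi> l) one"
proof (rule ext)
  fix S
  show "iota \<phi> l S = scaleE (ev \<phi> l) one S"
  proof (cases "S = {}")
    case True
    then show ?thesis by (simp add: iota_def ev_def one_def sg_def)
  next
    case False
    have "\<And>k. k \<notin> S \<Longrightarrow> l (insert k S) = 0"
    proof -
      fix k assume "k \<notin> S"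
      with False have "insert k S \<noteq> {i}" for i by auto
      then show "l (insert k S) = 0" using grade1_support[OF l] by blast
    qed
    then show ?thesis using False by (simp add: iota_def one_def)
  qed
qed

lemma iota_one: "iota \<phi> one = 0"
  by (auto simp: iota_def one_def fun_eq_iff)

lemma sg_wsign: "finite S \<Longrightarrow> sg k S = wsign {k} S"
  by (simp add: sg_def wsign_single_left)

lemma card_filter_insert:
  assumes "finite A" "x \<notin> A"
  shows "card {s\<in>insert x A. P s} = card {s\<in>A. P s} + (if P x then 1 else 0)"
proof -
  have "{s\<in>insert x A. P s} = (if P x then insert x {s\<in>A. P s} else {s\<in>A. P s})" by auto
  then show ?thesis using assms by simp
qed

lemma antider_sign:
  assumes U: "finite U" and i: "i \<in> U" and k: "k \<notin> U"
  shows "(sg k U :: 'a::field) * wsign {i} (insert k (U - {i})) = - (wsign {i} (U - {i}) * sg k (U - {i}))"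
proof -
  have fU': "finite (U - {i})" using U by simp
  have Ueq: "U = insert i (U - {i})" using i by auto
  have c1: "card {s\<in>U. s < k} = card {s\<in>U - {i}. s < k} + (if i < k then 1 else 0)"
    by (subst Ueq, rule card_filter_insert) (use fU' in auto)
  have c2: "card {s\<in>insert k (U - {i}). s < i} = card {s\<in>U - {i}. s < i} + (if k < i then 1 else 0)"
    by (rule card_filter_insert) (use fU' k in auto)
  have ik: "i \<noteq> k" using i k by auto
  show ?thesis
    unfolding sg_def wsign_single_left[OF fU'] wsign_single_left[OF finite_insert[THEN iffD2, OF fU']] c1 c2
    using ik by (cases "i < k") (auto simp: power_add)
qed

lemma antider_grade1:
  assumes l: "l \<in> grade 1" and f: "f \<in> extAlg"
  shows "iota \<phi> (wedge l f) = scaleE (ev \<phi> l) f - wedge l (iota \<phi> f)"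
proof (rule ext)
  fix U
  show "iota \<phi> (wedge l f) U = (scaleE (ev \<phi> l) f - wedge l (iota \<phi> f)) U"
  proof (cases "U \<subseteq> top5")
    case False
    then have "f U = 0" using f by (auto simp: extAlg_def)
    then show ?thesis using False by (simp add: iota_def wedge_def)
  next
    case True
    have fU: "finite U" using True finite_subset by blast
    define T where "T = top5 - U"
    have fT: "finite T" by (simp add: T_def)
    define X where "X = (\<lambda>k i. \<phi> k * l {i} * f (insert k (U - {i})))"
    have LHS: "iota \<phi> (wedge l f) U = (\<Sum>k\<in>T. \<phi> k * l {k} * f U) +
       (\<Sum>k\<in>T. \<Sum>i\<in>U. X k i * (sg k U * wsign {i} (insert k (U - {i}))))"
    proof -
      have "iota \<phi> (wedge l f) U = (\<Sum>k\<in>T. \<phi> k * sg k U * wedge l f (insert k U))"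
        using True by (simp add: iota_def T_def)
      also have "\<dots> = (\<Sum>k\<in>T. \<phi> k * l {k} * f U +
              (\<Sum>i\<in>U. X k i * (sg k U * wsign {i} (insert k (U - {i})))))"
      proof (rule sum.cong[OF refl])
        fix k assume k: "k \<in> T"
        then have kU: "k \<notin> U" "k < 5" by (auto simp: T_def)
        have sub: "insert k U \<subseteq> top5" using True kU by auto
        have "wedge l f (insert k U) = (\<Sum>i\<in>insert k U. l {i} * f (insert k U - {i}) * wsign {i} (insert k U - {i}))"
          using sub by (simp add: wedge_grade1_left[OF l])
        also have "\<dots> = l {k} * f U * wsign {k} U + (\<Sum>i\<in>U. l {i} * f (insert k (U - {i})) * wsign {i} (insert k (U - {i})))"
        proof -
          have "insert k U - {k} = U" using kU by auto
          moreover have "\<And>i. i \<in> U \<Longrightarrow> insert k U - {i} = insert k (U - {i})" using kU by auto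
          ultimately show ?thesis using fU kU by (simp add: sum.insert cong: sum.cong)
        qed
        finally have ew: "wedge l f (insert k U) = l {k} * f U * wsign {k} U + (\<Sum>i\<in>U. l {i} * f (insert k (U - {i})) * wsign {i} (insert k (U - {i})))" .
        have "\<phi> k * sg k U * wedge l f (insert k U) =
           \<phi> k * l {k} * f U * (sg k U * wsign {k} U) +
           (\<Sum>i\<in>U. \<phi> k * l {i} * f (insert k (U - {i})) * (sg k U * wsign {i} (insert k (U - {i}))))"
          unfolding ew by (simp only: distrib_left sum_distrib_left mult_ac)
        moreover have "(sg k U :: 'a) * wsign {k} U = 1" using fU by (simp add: sg_wsign wsign_sq)
        ultimately show "\<phi> k * sg k U * wedge l f (insert k U) = \<phi> k * l {k} * f U +
              (\<Sum>i\<in>U. X k i * (sg k U * wsign {i} (insert k (U - {i}))))"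
          by (simp add: X_def)
      qed
      also have "\<dots> = (\<Sum>k\<in>T. \<phi> k * l {k} * f U) + (\<Sum>k\<in>T. \<Sum>i\<in>U. X k i * (sg k U * wsign {i} (insert k (U - {i}))))"
        by (rule sum.distrib)
      finally show ?thesis .
    qed
    have RHS: "(scaleE (ev \<phi> l) f - wedge l (iota \<phi> f)) U = (\<Sum>k\<in>T. \<phi> k * l {k} * f U) -
       (\<Sum>i\<in>U. \<Sum>k\<in>T. X k i * (wsign {i} (U - {i}) * sg k (U - {i})))"
    proof -
      have w: "wedge l (iota \<phi> f) U = (\<Sum>i\<in>U. l {i} * iota \<phi> f (U - {i}) * wsign {i} (U - {i}))"
        using True by (simp add: wedge_grade1_left[OF l])
      have inner: "l {i} * iota \<phi> f (U - {i}) * wsign {i} (U - {i}) =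
          \<phi> i * l {i} * f U + (\<Sum>k\<in>T. X k i * (wsign {i} (U - {i}) * sg k (U - {i})))" if i: "i \<in> U" for i
      proof -
        have sub: "U - {i} \<subseteq> top5" using True by auto
        have eqT: "top5 - (U - {i}) = insert i T" using True i by (auto simp: T_def)
        have iT: "i \<notin> T" using i by (simp add: T_def)
        have "iota \<phi> f (U - {i}) = \<phi> i * sg i (U - {i}) * f (insert i (U - {i})) +
               (\<Sum>k\<in>T. \<phi> k * sg k (U - {i}) * f (insert k (U - {i})))"
          using sub eqT iT fT by (simp add: iota_def)
        moreover have "insert i (U - {i}) = U" using i by auto
        moreover have "(sg i (U - {i}) :: 'a) * wsign {i} (U - {i}) = 1"
          using fU by (simp add: sg_wsign wsign_sq)
        ultimately have A: "iota \<phi> f (U - {i}) = \<phi> i * sg i (U - {i}) * f U +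
               (\<Sum>k\<in>T. \<phi> k * sg k (U - {i}) * f (insert k (U - {i})))"
          and C: "(sg i (U - {i}) :: 'a) * wsign {i} (U - {i}) = 1" by simp_all
        have "l {i} * iota \<phi> f (U - {i}) * wsign {i} (U - {i}) = \<phi> i * l {i} * f U * (sg i (U - {i}) * wsign {i} (U - {i}))
            + (\<Sum>k\<in>T. \<phi> k * l {i} * f (insert k (U - {i})) * (wsign {i} (U - {i}) * sg k (U - {i})))"
          unfolding A by (simp only: distrib_left distrib_right sum_distrib_left sum_distrib_right mult_ac)
        then show ?thesis by (simp only: C mult_1_right X_def)
      qed
      have "wedge l (iota \<phi> f) U = (\<Sum>i\<in>U. \<phi> i * l {i} * f U) + (\<Sum>i\<in>U. \<Sum>k\<in>T. X k i * (wsign {i} (U - {i}) * sg k (U - {i})))"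
        unfolding w by (simp add: inner sum.distrib)
      moreover have evl: "ev \<phi> l = (\<Sum>k\<in>T. \<phi> k * l {k}) + (\<Sum>i\<in>U. \<phi> i * l {i})"
        unfolding ev_def T_def using True sum.subset_diff[of U top5] by simp
      moreover have "ev \<phi> l * f U = (\<Sum>k\<in>T. \<phi> k * l {k} * f U) + (\<Sum>i\<in>U. \<phi> i * l {i} * f U)"
        unfolding evl by (simp only: distrib_right sum_distrib_right)
      moreover have "\<And>a b c d e :: 'a. e = b + c \<Longrightarrow> a = c + d \<Longrightarrow> e - a = b - d" by simp
      ultimately show ?thesis unfolding fun_diff_def scaleE_apply by blast
    qed
    have "(\<Sum>k\<in>T. \<Sum>i\<in>U. X k i * (sg k U * wsign {i} (insert k (U - {i})))) =
          - (\<Sum>i\<in>U. \<Sum>k\<in>T. X k i * (wsign {i} (U - {i}) * sg k (U - {i})))"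
    proof -
      have "(\<Sum>k\<in>T. \<Sum>i\<in>U. X k i * (sg k U * wsign {i} (insert k (U - {i})))) =
            (\<Sum>k\<in>T. \<Sum>i\<in>U. - (X k i * (wsign {i} (U - {i}) * sg k (U - {i}))))"
      proof (intro sum.cong refl)
        fix k i assume "k \<in> T" "i \<in> U"
        then show "X k i * (sg k U * wsign {i} (insert k (U - {i}))) = - (X k i * (wsign {i} (U - {i}) * sg k (U - {i})))"
        proof -
          have "(sg k U :: 'a) * wsign {i} (insert k (U - {i})) = - (wsign {i} (U - {i}) * sg k (U - {i}))"
            using antider_sign[OF fU, of i k] \<open>k \<in> T\<close> \<open>i \<in> U\<close> by (simp add: T_def)
          then show ?thesis by (simp only: mult_minus_right)
        qed
      qed
      also have "\<dots> = - (\<Sum>i\<in>U. \<Sum>k\<in>T. X k i * (wsign {i} (U - {i}) * sg k (U - {i})))"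
        by (subst sum.swap) (simp add: sum_negf)
      finally show ?thesis .
    qed
    then show ?thesis using LHS RHS by simp
  qed
qed


lemma wedge_extAlg: "wedge f g \<in> extAlg"
  by (auto simp: wedge_def extAlg_def split: if_splits)

lemma antider_grade2:
  assumes p: "p \<in> grade 2" and f: "f \<in> extAlg"
  shows "iota \<phi> (wedge p f) = wedge (iota \<phi> p) f + wedge p (iota \<phi> f)"
proof -
  let ?P = "{p. iota \<phi> (wedge p f) = wedge (iota \<phi> p) f + wedge p (iota \<phi> f)}"
  have sub: "E.subspace ?P"
    unfolding E.subspace_def
    by (auto simp: wedge_add_left wedge_scale_left iota_add iota_scale wedge_add_right wedge_scale_right
        add_ac E.scale_right_distrib)
  have gen: "wedge (ee i) (ee j) \<in> ?P" if "i < 5" "j < 5" for i j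
  proof -
    have ei: "ee i \<in> grade 1" and ej: "ee j \<in> grade 1" using that ee_grade by auto
    have "iota \<phi> (wedge (wedge (ee i) (ee j)) f) = iota \<phi> (wedge (ee i) (wedge (ee j) f))"
      by (simp add: wedge_assoc)
    also have "\<dots> = scaleE (\<phi> i) (wedge (ee j) f) - wedge (ee i) (scaleE (\<phi> j) f - wedge (ee j) (iota \<phi> f))"
      using antider_grade1[OF ei wedge_extAlg[of "ee j" f], of \<phi>] antider_grade1[OF ej f, of \<phi>]
      by (simp only: ev_ee[OF that(1)] ev_ee[OF that(2)])
    also have "\<dots> = wedge (scaleE (\<phi> i) (ee j) - scaleE (\<phi> j) (ee i)) f + wedge (wedge (ee i) (ee j)) (iota \<phi> f)"
      by (simp add: wedge_diff_left wedge_diff_right wedge_scale_left wedge_scale_right wedge_assoc)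
    also have "iota \<phi> (wedge (ee i) (ee j)) = scaleE (\<phi> i) (ee j) - scaleE (\<phi> j) (ee i)"
    proof -
      have a1: "iota \<phi> (wedge (ee i) (ee j)) = scaleE (\<phi> i) (ee j) - wedge (ee i) (iota \<phi> (ee j))"
        using antider_grade1[OF ei grade_extAlg[OF ej], of \<phi>] by (simp only: ev_ee[OF that(1)])
      have a2: "iota \<phi> (ee j) = scaleE (\<phi> j) one"
        using iota_grade1[OF ej, of \<phi>] by (simp only: ev_ee[OF that(2)])
      have "iota \<phi> (wedge (ee i) (ee j)) = scaleE (\<phi> i) (ee j) - wedge (ee i) (scaleE (\<phi> j) one)"
        unfolding a1 a2 ..
      also have "wedge (ee i) (scaleE (\<phi> j) one) = scaleE (\<phi> j) (ee i)"
        by (simp add: wedge_scale_right wedge_one_right grade_extAlg[OF ei])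
      finally show ?thesis .
    qed
    ultimately show ?thesis by simp
  qed
  show ?thesis using grade2_induct[OF p sub gen] by simp
qed

lemma functional_nonzero:
  assumes "a \<in> grade 1" "a \<noteq> 0"
  shows "\<exists>\<phi>. ev \<phi> a = 1"
proof -
  have "\<exists>k<5. a {k} \<noteq> 0"
  proof (rule ccontr)
    assume nz: "\<not> (\<exists>k<5. a {k} \<noteq> 0)"
    have "a = (\<Sum>k\<in>top5. scaleE (a {k}) (ee k))" using grade1_eq[OF assms(1)] by simp
    also have "\<dots> = 0" using nz by (intro sum.neutral) (auto simp: scaleE_def fun_eq_iff)
    finally show False using assms by simp
  qed
  then obtain k where k: "k < 5" "a {k} \<noteq> 0" by blast
  let ?\<phi> = "\<lambda>i. if i = k then 1 / a {k} else 0"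
  have "ev ?\<phi> a = (\<Sum>i\<in>top5. if i = k then 1 else 0)"
    unfolding ev_def by (intro sum.cong) (auto simp: k)
  also have "\<dots> = 1" using k by simp
  finally show ?thesis by blast
qed

lemma division:
  assumes a: "a \<in> grade 1" and e: "ev \<phi> a = 1" and f: "f \<in> extAlg" and z: "wedge a f = 0"
  shows "f = wedge a (iota \<phi> f)"
  using antider_grade1[OF a f, of \<phi>] z e by simp

lemma division':
  assumes a: "a \<in> grade 1" "a \<noteq> 0" and f: "f \<in> grade (Suc d)" and z: "wedge a f = 0"
  shows "\<exists>g \<in> grade d. f = wedge a g"
proof -
  obtain \<phi> where "ev \<phi> a = 1" using functional_nonzero[OF a] by blast
  then show ?thesis using division[OF a(1) _ grade_extAlg[OF f] z] iota_grade[OF f] by blast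
qed

lemma division2:
  assumes a: "a \<in> grade 1" "a \<noteq> 0" and f: "f \<in> grade 2" and z: "wedge a f = 0"
  shows "\<exists>g \<in> grade 1. f = wedge a g"
  using division'[OF a, of f "Suc 0"] f z by (simp add: numeral_2_eq_2)

lemma ev_linear: "Vector_Spaces.linear scaleE ((*)::'a \<Rightarrow> 'a \<Rightarrow> 'a) (ev \<phi> :: 'a::field ext \<Rightarrow> 'a)"
  by (simp add: Vector_Spaces.linear_iff vs_E vs_F ev_add ev_scale)

lemma functional_exists:
  assumes v: "v \<in> grade 1" and S: "S \<subseteq> grade 1" and nv: "v \<notin> E.span S"
  shows "\<exists>\<phi>. ev \<phi> v = 1 \<and> (\<forall>s\<in>S. ev \<phi> s = 0)"
proof -
  obtain B where B: "B \<subseteq> S" "\<not> E.dependent B" "S \<subseteq> E.span B"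
    using E.maximal_independent_subset[of S] by blast
  have "E.span B \<subseteq> E.span S" using B(1) E.span_mono by blast
  then have vB: "v \<notin> E.span B" using nv by blast
  then have ind: "\<not> E.dependent (insert v B)" using B(2) E.independent_insertI by blast
  obtain g where g: "Vector_Spaces.linear scaleE (*) g" "\<forall>x\<in>insert v B. g x = (if x = v then (1::'a) else 0)"
    using EP.linear_independent_extend[OF ind, of "\<lambda>x. if x = v then 1 else 0"] by blast
  interpret g: Vector_Spaces.linear scaleE "(*)" g by (rule g(1))
  define \<phi> where "\<phi> k = g (ee k)" for k
  have gl: "g l = ev \<phi> l" if "l \<in> grade 1" for l
  proof -
    have "g l = g (\<Sum>k\<in>top5. scaleE (l {k}) (ee k))" using grade1_eq[OF that] by simp
    also have "\<dots> = (\<Sum>k\<in>top5. l {k} * \<phi> k)" by (simp add: g.sum g.scale \<phi>_def)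
    finally show ?thesis by (simp add: ev_def mult.commute)
  qed
  have "v \<notin> B" using vB E.span_base by blast
  have gs: "g s = 0" if "s \<in> S" for s
  proof -
    have "s \<in> E.span B" using that B(3) by blast
    moreover have "\<And>x. x \<in> B \<Longrightarrow> g x = 0" using g(2) \<open>v \<notin> B\<close> by auto
    ultimately show ?thesis using g.eq_0_on_span by blast
  qed
  have "ev \<phi> s = 0" if "s \<in> S" for s
  proof -
    have "s \<in> grade 1" using S that by blast
    then show ?thesis using gl gs[OF that] by simp
  qed
  moreover have "ev \<phi> v = 1" using gl[OF v] g(2) by simp
  ultimately show ?thesis by blast
qed

lemma not_in_span_wedge:
  assumes m: "m \<in> grade 1" and S: "S \<subseteq> grade 1" and w: "\<omega> \<in> extAlg" "\<omega> \<noteq> 0"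
    and kill: "\<And>\<phi>. (\<forall>s\<in>S. ev \<phi> s = 0) \<Longrightarrow> iota \<phi> \<omega> = 0"
    and z: "wedge m \<omega> = 0"
  shows "m \<in> E.span S"
proof (rule ccontr)
  assume "m \<notin> E.span S"
  then obtain \<phi> where \<phi>: "ev \<phi> m = 1" "\<forall>s\<in>S. ev \<phi> s = 0" using functional_exists[OF m S] by blast
  have "iota \<phi> (wedge m \<omega>) = \<omega>" using antider_grade1[OF m w(1), of \<phi>] \<phi> kill by simp
  then show False using z w(2) by simp
qed

lemma decomposable:
  assumes two: "(2::'a::field) \<noteq> 0" and p: "(p::'a ext) \<in> grade 2" "p \<noteq> 0" and pp: "wedge p p = 0"
  shows "\<exists>a b. a \<in> grade 1 \<and> b \<in> grade 1 \<and> p = wedge a b"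
proof -
  obtain U where "p U \<noteq> 0" using p(2) by (auto simp: fun_eq_iff)
  then obtain i j where ij: "i < j" "j < 5" "U = {i, j}" "p {i, j} \<noteq> 0"
    using grade2_support[OF p(1)] by blast
  define \<phi> where "\<phi> = (\<lambda>k. if k = i then (1::'a) else 0)"
  define a where "a = iota \<phi> p"
  have a1: "a \<in> grade 1" unfolding a_def using iota_grade2 p(1) by blast
  have "a {j} = (\<Sum>k\<in>top5 - {j}. \<phi> k * sg k {j} * p (insert k {j}))"
    using ij by (simp add: a_def iota_def)
  also have "\<dots> = (\<Sum>k\<in>top5 - {j}. if k = i then p {i, j} else 0)"
  proof (intro sum.cong refl)
    fix k assume "k \<in> top5 - {j}"
    have e: "{s \<in> {j}. s < i} = {}" using ij by auto
    have "sg i {j} = (1::'a)" by (simp only: sg_def e card.empty power_0)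
    moreover have "insert i {j} = {i, j}" by simp
    ultimately show "\<phi> k * sg k {j} * p (insert k {j}) = (if k = i then p {i, j} else 0)"
      by (simp add: \<phi>_def)
  qed
  also have "\<dots> = p {i, j}" using ij by simp
  finally have "a \<noteq> 0" using ij by (auto simp: fun_eq_iff)
  have "0 = iota \<phi> (wedge p p)" using pp by simp
  also have "\<dots> = wedge a p + wedge p a" using antider_grade2[OF p(1) grade_extAlg[OF p(1)]] by (simp add: a_def)
  also have "\<dots> = scaleE 2 (wedge a p)"
  proof -
    have "wedge p a = wedge a p" using wedge_comm2[OF a1 p(1)] by simp
    moreover have "scaleE 2 x = x + (x::'a ext)" for x
      unfolding fun_eq_iff scaleE_apply plus_fun_apply by (simp only: mult_2 simp_thms)
    ultimately show ?thesis by simp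
  qed
  finally have "wedge a p = 0" using two by (simp add: fun_eq_iff)
  then obtain b where "b \<in> grade 1" "p = wedge a b" using division2[OF a1 \<open>a \<noteq> 0\<close> p(1)] by auto
  then show ?thesis using a1 by blast
qed

lemma rank_nullity_le:
  assumes S: "E.subspace S" and B0: "finite B0" "S \<subseteq> E.span B0"
    and F: "Vector_Spaces.linear scaleE scaleE F"
  shows "E.dim (S :: 'a::field ext set) \<le> E.dim {x\<in>S. F x = 0} + E.dim (F ` S)"
proof -
  interpret F: Vector_Spaces.linear scaleE scaleE F by (rule F)
  define K where "K = {x\<in>S. F x = 0}"
  obtain BK where BK: "BK \<subseteq> K" "\<not> E.dependent BK" "K \<subseteq> E.span BK" "card BK = E.dim K"
    using E.basis_exists by blast
  obtain BI where BI: "BI \<subseteq> F ` S" "\<not> E.dependent BI" "F ` S \<subseteq> E.span BI" "card BI = E.dim (F ` S)"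
    using E.basis_exists by blast
  have "F ` S \<subseteq> E.span (F ` B0)" using B0(2) F.span_image by blast
  then have fBI: "finite BI" using E.independent_span_bound[OF finite_imageI[OF B0(1)] BI(2)] BI(1) by blast
  have "BK \<subseteq> E.span B0" using BK(1) B0(2) K_def by auto
  then have fBK: "finite BK" using E.independent_span_bound[OF B0(1) BK(2)] by blast
  have "\<forall>y\<in>BI. \<exists>x. x \<in> S \<and> F x = y" using BI(1) by blast
  then obtain g where g: "\<And>y. y \<in> BI \<Longrightarrow> g y \<in> S \<and> F (g y) = y" by metis
  define G where "G = g ` BI"
  have GS: "G \<subseteq> S" using g by (auto simp: G_def)
  have FG: "F ` G = BI" using g by (force simp: G_def image_image)
  have "S \<subseteq> E.span (BK \<union> G)"
  proof
    fix s assume s: "s \<in> S"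
    have "F s \<in> E.span BI" using BI(3) s by blast
    also have "E.span BI = F ` E.span G" using F.span_image[of G] FG by simp
    finally have "F s \<in> F ` E.span G" .
    then obtain s' where s': "s' \<in> E.span G" "F s' = F s" by (metis imageE)
    have "s' \<in> S" using s' GS E.span_minimal S by blast
    then have "s - s' \<in> K" using s s' S by (auto simp: K_def F.diff E.subspace_diff)
    then have "s - s' \<in> E.span (BK \<union> G)" using BK(3) E.span_mono[of BK "BK \<union> G"] by blast
    moreover have "s' \<in> E.span (BK \<union> G)" using s'(1) E.span_mono[of G "BK \<union> G"] by blast
    ultimately have "(s - s') + s' \<in> E.span (BK \<union> G)" by (rule E.span_add)
    then show "s \<in> E.span (BK \<union> G)" by simp
  qed
  then have "E.dim S \<le> card (BK \<union> G)" using E.dim_le_card fBK fBI G_def by blast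
  also have "\<dots> \<le> card BK + card G" by (rule card_Un_le)
  also have "card G \<le> card BI" unfolding G_def by (rule card_image_le[OF fBI])
  finally show ?thesis using BK(4) BI(4) K_def by simp
qed




lemma Collect_insert_filter: "{x \<in> insert a A. P x} = (if P a then insert a {x\<in>A. P x} else {x\<in>A. P x})"
  by auto

lemma wsign_alt: "finite S \<Longrightarrow> wsign S T = (-1::'a::field) ^ (\<Sum>s\<in>S. card {t\<in>T. t < s})"
proof -
  assume "finite S"
  have "{(s, t). s \<in> S \<and> t \<in> T \<and> t < s} = Sigma S (\<lambda>s. {t\<in>T. t<s})" by auto
  moreover have "\<forall>s\<in>S. finite {t\<in>T. t<s}" by (auto intro: finite_subset[of _ "{..<s}" for s])
  ultimately show ?thesis unfolding wsign_def by (simp only: card_SigmaI[OF \<open>finite S\<close>])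
qed

lemma card_filter2: "u \<noteq> w \<Longrightarrow> card {t\<in>{u,w}. t < (x::nat)} = (if u < x then 1 else 0) + (if w < x then 1 else 0)"
proof -
  assume uw: "u \<noteq> w"
  show ?thesis
  proof (cases "u < x"; cases "w < x")
    assume "u < x" "w < x" then have "{t\<in>{u,w}. t < x} = {u,w}" by auto
    then show ?thesis using uw \<open>u < x\<close> \<open>w < x\<close> by simp
  next
    assume "u < x" "\<not> w < x" then have "{t\<in>{u,w}. t < x} = {u}" by auto
    then show ?thesis using \<open>u < x\<close> \<open>\<not> w < x\<close> by simp
  next
    assume "\<not> u < x" "w < x" then have "{t\<in>{u,w}. t < x} = {w}" by auto
    then show ?thesis using \<open>\<not> u < x\<close> \<open>w < x\<close> by simp
  next
    assume "\<not> u < x" "\<not> w < x" then have "{t\<in>{u,w}. t < x} = {}" by auto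
    then show ?thesis using \<open>\<not> u < x\<close> \<open>\<not> w < x\<close> by simp
  qed
qed

lemma wsign22:
  assumes "x \<noteq> y" "u \<noteq> w"
  shows "wsign {x,y} {u,w} = (-1::'a::field) ^ ((if u < x then 1 else 0) + (if w < x then 1 else 0) +
           ((if u < y then 1 else 0) + (if w < y then 1 else 0)))"
proof -
  have "wsign {x,y} {u,w} = (-1::'a) ^ (\<Sum>s\<in>{x,y}. card {t\<in>{u,w}. t < s})"
    by (rule wsign_alt) simp
  also have "(\<Sum>s\<in>{x,y}. card {t\<in>{u,w}. t < s}) = card {t\<in>{u,w}. t < x} + card {t\<in>{u,w}. t < y}"
    using assms(1) by simp
  finally show ?thesis by (simp only: card_filter2[OF assms(2)])
qed

lemma wedge22:
  assumes p: "p \<in> grade 2" and q: "q \<in> grade 2" and o: "a < b" "b < c" "c < d" "d < 5"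
  shows "wedge p q {a,b,c,d} = p{a,b}*q{c,d} - p{a,c}*q{b,d} + p{a,d}*q{b,c} + p{b,c}*q{a,d} - p{b,d}*q{a,c} + p{c,d}*q{a,b}"
proof -
  let ?U = "{a,b,c,d}"
  have U: "?U \<subseteq> top5" using o by auto
  have P2: "{S \<in> Pow ?U. card S = 2} = {{a,b},{a,c},{a,d},{b,c},{b,d},{c,d}}"
  proof
    show "{S \<in> Pow ?U. card S = 2} \<subseteq> {{a,b},{a,c},{a,d},{b,c},{b,d},{c,d}}"
    proof
      fix S assume "S \<in> {S \<in> Pow ?U. card S = 2}"
      then obtain x y where xy: "S = {x, y}" "x \<noteq> y" "x \<in> ?U" "y \<in> ?U" by (auto simp: card_2_iff)
      from xy(3) have "x = a \<or> x = b \<or> x = c \<or> x = d" by simp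
      moreover from xy(4) have "y = a \<or> y = b \<or> y = c \<or> y = d" by simp
      ultimately show "S \<in> {{a,b},{a,c},{a,d},{b,c},{b,d},{c,d}}" using xy(1,2)
        by (elim disjE) (simp_all add: insert_commute)
    qed
    show "{{a,b},{a,c},{a,d},{b,c},{b,d},{c,d}} \<subseteq> {S \<in> Pow ?U. card S = 2}" using o by auto
  qed
  have "wedge p q ?U = (\<Sum>S\<in>Pow ?U. p S * q (?U - S) * wsign S (?U - S))"
    using U by (simp add: wedge_def)
  also have "\<dots> = (\<Sum>S\<in>{S \<in> Pow ?U. card S = 2}. p S * q (?U - S) * wsign S (?U - S))"
    by (rule sum.mono_neutral_right) (auto simp: grade_zero_outside[OF p] intro: finite_subset)
  also have "\<dots> = (\<Sum>S\<in>{{a,b},{a,c},{a,d},{b,c},{b,d},{c,d}}. p S * q (?U - S) * wsign S (?U - S))"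
    by (simp only: P2)
  also have "\<dots> = p{a,b}*q{c,d} - p{a,c}*q{b,d} + p{a,d}*q{b,c} + p{b,c}*q{a,d} - p{b,d}*q{a,c} + p{c,d}*q{a,b}"
    using o by (simp add: doubleton_eq_iff insert_Diff_if wsign22 insert_commute)
  finally show ?thesis .
qed


definition phiOf :: "'a::field ext \<Rightarrow> nat \<Rightarrow> 'a" where
  "phiOf r = (\<lambda>k. wedge (ee k) r top5)"

lemma phiOf_val: "k < 5 \<Longrightarrow> phiOf r k = r (top5 - {k}) * (-1) ^ k"
proof -
  assume k: "k < 5"
  have "{t \<in> top5 - {k}. t < k} = {0..<k}" using k by auto
  then show ?thesis using k by (simp add: phiOf_def wedge_ee_left wsign_single_left)
qed

lemma top5_eq: "top5 = {0,1,2,3,4}" by auto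

lemma sum_top_minus: "j \<in> top5 \<Longrightarrow> (\<Sum>k\<in>top5 - {j}. (g::nat \<Rightarrow> 'a::ab_group_add) k) = g 0 + g 1 + g 2 + g 3 + g 4 - g j"
proof -
  assume j: "j \<in> top5"
  have A: "(\<Sum>k\<in>top5. g k) = g j + (\<Sum>k\<in>top5 - {j}. g k)" by (rule sum.remove[OF _ j]) simp
  have B: "(\<Sum>k\<in>top5. g k) = g 0 + g 1 + g 2 + g 3 + g 4" by (simp add: top5_eq add.assoc)
  have "(\<Sum>k\<in>top5 - {j}. g k) = (g j + (\<Sum>k\<in>top5 - {j}. g k)) - g j" by simp
  also have "g j + (\<Sum>k\<in>top5 - {j}. g k) = (\<Sum>k\<in>top5. g k)" using A by (rule sym)
  also have "\<dots> = g 0 + g 1 + g 2 + g 3 + g 4" by (rule B)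
  finally show ?thesis .
qed

lemma iota_single:
  assumes j: "j < 5"
  shows "iota \<phi> q {j} = (\<Sum>k\<in>top5 - {j}. \<phi> k * (if j < k then - q {j,k} else q {k,j}))"
proof -
  have "iota \<phi> q {j} = (\<Sum>k\<in>top5 - {j}. \<phi> k * sg k {j} * q (insert k {j}))"
    using j by (simp add: iota_def)
  also have "\<dots> = (\<Sum>k\<in>top5 - {j}. \<phi> k * (if j < k then - q {j,k} else q {k,j}))"
  proof (rule sum.cong[OF refl])
    fix k assume k: "k \<in> top5 - {j}"
    show "\<phi> k * sg k {j} * q (insert k {j}) = \<phi> k * (if j < k then - q {j,k} else q {k,j})"
    proof (cases "j < k")
      case True
      then have "{s \<in> {j}. s < k} = {j}" by auto
      then have "sg k {j} = (-1::'a)" by (simp only: sg_def) simp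
      moreover have "insert k {j} = {j, k}" by auto
      ultimately show ?thesis using True by simp
    next
      case False
      then have "{s \<in> {j}. s < k} = {}" by auto
      then have "sg k {j} = (1::'a)" by (simp only: sg_def card.empty power_0)
      then show ?thesis using False by simp
    qed
  qed
  finally show ?thesis .
qed

lemma iota_at0: "iota \<phi> q {0} = - (\<phi> 1 * q {0,1}) - (\<phi> 2 * q {0,2}) - (\<phi> 3 * q {0,3}) - (\<phi> 4 * q {0,4})"
  by (simp add: iota_single sum_top_minus algebra_simps)

lemma iota_at1: "iota \<phi> q {1} = \<phi> 0 * q {0,1} - (\<phi> 2 * q {1,2}) - (\<phi> 3 * q {1,3}) - (\<phi> 4 * q {1,4})"
  by (simp add: iota_single sum_top_minus algebra_simps)

lemma iota_at2: "iota \<phi> q {2} = \<phi> 0 * q {0,2} + \<phi> 1 * q {1,2} - (\<phi> 3 * q {2,3}) - (\<phi> 4 * q {2,4})"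
  by (simp add: iota_single sum_top_minus algebra_simps)

lemma iota_at3: "iota \<phi> q {3} = \<phi> 0 * q {0,3} + \<phi> 1 * q {1,3} + \<phi> 2 * q {2,3} - (\<phi> 4 * q {3,4})"
  by (simp add: iota_single sum_top_minus algebra_simps)

lemma iota_at4: "iota \<phi> q {4} = \<phi> 0 * q {0,4} + \<phi> 1 * q {1,4} + \<phi> 2 * q {2,4} + \<phi> 3 * q {3,4}"
  by (simp add: iota_single sum_top_minus algebra_simps)

lemma phiOf_expl: "phiOf r 0 = r {1,2,3,4}" "phiOf r 1 = - r {0,2,3,4}" "phiOf r 2 = r {0,1,3,4}"
     "phiOf r 3 = - r {0,1,2,4}" "phiOf r 4 = r {0,1,2,3}"
proof -
  have d: "top5 - {0} = {1,2,3,4}" "top5 - {1} = {0,2,3,4}" "top5 - {2} = {0,1,3,4}"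
     "top5 - {3} = {0,1,2,4}" "top5 - {4} = {0,1,2,3}" by auto
  show "phiOf r 0 = r {1,2,3,4}" using phiOf_val[of 0 r] d(1) by simp
  show "phiOf r 1 = - r {0,2,3,4}" using phiOf_val[of 1 r] d(2) by simp
  show "phiOf r 2 = r {0,1,3,4}" using phiOf_val[of 2 r] d(3) by simp
  show "phiOf r 3 = - r {0,1,2,4}" using phiOf_val[of 3 r] d(4) by simp
  show "phiOf r 4 = r {0,1,2,3}" using phiOf_val[of 4 r] d(5) by simp
qed

lemma wedge22_expl:
  assumes p: "p \<in> grade 2" and q: "q \<in> grade 2"
  shows
    "wedge p q {1,2,3,4} = p{1,2}*q{3,4} - p{1,3}*q{2,4} + p{1,4}*q{2,3} + p{2,3}*q{1,4} - p{2,4}*q{1,3} + p{3,4}*q{1,2}"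
    "wedge p q {0,2,3,4} = p{0,2}*q{3,4} - p{0,3}*q{2,4} + p{0,4}*q{2,3} + p{2,3}*q{0,4} - p{2,4}*q{0,3} + p{3,4}*q{0,2}"
    "wedge p q {0,1,3,4} = p{0,1}*q{3,4} - p{0,3}*q{1,4} + p{0,4}*q{1,3} + p{1,3}*q{0,4} - p{1,4}*q{0,3} + p{3,4}*q{0,1}"
    "wedge p q {0,1,2,4} = p{0,1}*q{2,4} - p{0,2}*q{1,4} + p{0,4}*q{1,2} + p{1,2}*q{0,4} - p{1,4}*q{0,2} + p{2,4}*q{0,1}"
    "wedge p q {0,1,2,3} = p{0,1}*q{2,3} - p{0,2}*q{1,3} + p{0,3}*q{1,2} + p{1,2}*q{0,3} - p{1,3}*q{0,2} + p{2,3}*q{0,1}"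
  using wedge22[OF p q, of 1 2 3 4] wedge22[OF p q, of 0 2 3 4] wedge22[OF p q, of 0 1 3 4]
    wedge22[OF p q, of 0 1 2 4] wedge22[OF p q, of 0 1 2 3] by simp_all

lemma caseA_identity:
  assumes p: "p \<in> grade 2" and q: "q \<in> grade 2" and j: "j < 5"
  shows "iota (phiOf (wedge p p)) q {j} = -2 * iota (phiOf (wedge p q)) p {j}"
proof -
  have js: "j = 0 \<or> j = 1 \<or> j = 2 \<or> j = 3 \<or> j = 4" using j by auto
  note E = iota_at0 iota_at1 iota_at2 iota_at3 iota_at4 phiOf_expl wedge22_expl[OF p p] wedge22_expl[OF p q]
  from js show ?thesis
  proof (elim disjE)
    assume j0: "j = 0" show ?thesis unfolding j0 E by algebra
  next
    assume j0: "j = 1" show ?thesis unfolding j0 E by algebra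
  next
    assume j0: "j = 2" show ?thesis unfolding j0 E by algebra
  next
    assume j0: "j = 3" show ?thesis unfolding j0 E by algebra
  next
    assume j0: "j = 4" show ?thesis unfolding j0 E by algebra
  qed
qed

lemma wedge_grade12: "l \<in> grade 1 \<Longrightarrow> q \<in> grade 2 \<Longrightarrow> wedge l q \<in> grade 3"
proof -
  assume "l \<in> grade 1" "q \<in> grade 2"
  moreover have e: "(1::nat) + 2 = 3" by simp
  ultimately show ?thesis using wedge_grade[of l 1 q 2] unfolding e by blast
qed

lemma choose_vals: "(5::nat) choose 1 = 5" "(5::nat) choose 2 = 10" "(5::nat) choose 3 = 10"
  by (simp_all add: numeral_eq_Suc)

lemma grade_span: "grade d \<subseteq> E.span ((delta :: nat set \<Rightarrow> 'a::field ext) ` Pd d)"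
proof
  fix f :: "'a ext" assume f: "f \<in> grade d"
  have "(\<Sum>S\<in>Pd d. scaleE (f S) (delta S)) \<in> E.span (delta ` Pd d)"
    by (intro E.span_sum E.span_scale E.span_base) auto
  then show "f \<in> E.span (delta ` Pd d)" using grade_expand[OF f] by simp
qed

lemma finite_delta_Pd: "finite ((delta :: nat set \<Rightarrow> 'a::field ext) ` Pd d)"
  using finite_Pd by simp

lemma two_elems:
  assumes "finite B" "card B \<ge> 2"
  shows "\<exists>u v. u \<in> B \<and> v \<in> B \<and> u \<noteq> v"
proof -
  obtain u where u: "u \<in> B" using assms by fastforce
  have "card (B - {u}) \<ge> 1" using assms u by simp
  then have "B - {u} \<noteq> {}" by (metis card.empty not_one_le_zero)
  then obtain v where "v \<in> B - {u}" by blast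
  then show ?thesis using u by blast
qed

lemma indep2:
  assumes ind: "\<not> E.dependent {u, v}" and uv: "u \<noteq> v"
    and z: "scaleE \<alpha> u + scaleE \<beta> v = (0::'a::field ext)"
  shows "\<alpha> = 0 \<and> \<beta> = 0"
proof (rule ccontr)
  assume "\<not> (\<alpha> = 0 \<and> \<beta> = 0)"
  let ?c = "\<lambda>x. if x = u then \<alpha> else \<beta>"
  have s1: "(\<Sum>x\<in>{u, v}. scaleE (?c x) x) = scaleE (?c u) u + scaleE (?c v) v"
    using uv by (simp only: sum.insert[OF finite.insertI[OF finite.emptyI]] sum.insert[OF finite.emptyI]
       insert_iff empty_iff simp_thms sum.empty add_0_right)
  have "?c u = \<alpha>" "?c v = \<beta>" using uv by auto
  then have F1: "(\<Sum>x\<in>{u, v}. scaleE (?c x) x) = 0" using s1 z by simp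
  have F2: "\<exists>x\<in>{u, v}. ?c x \<noteq> 0" using \<open>\<not> (\<alpha> = 0 \<and> \<beta> = 0)\<close> uv by auto
  have fin2: "finite {u, v}" by simp
  have "\<exists>c. (\<exists>x\<in>{u, v}. c x \<noteq> 0) \<and> (\<Sum>x\<in>{u, v}. scaleE (c x) x) = 0"
    by (rule exI[of _ ?c], rule conjI[OF F2 F1])
  then have "E.dependent {u, v}" unfolding E.dependent_finite[OF fin2] .
  then show False using ind by simp
qed

lemma dual_step:
  assumes T: "E.subspace T" "T \<subseteq> grade 3" "E.dim T = 8"
  shows "\<exists>p1 p2. p1 \<in> grade 2 \<and> p2 \<in> grade 2 \<and> p1 \<noteq> p2 \<and> \<not> E.dependent {p1, p2} \<and>
     (\<forall>t\<in>T. wedge p1 t top5 = 0) \<and> (\<forall>t\<in>T. wedge p2 t top5 = (0::'a::field))"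
proof -
  obtain BT where BT: "BT \<subseteq> T" "\<not> E.dependent BT" "T \<subseteq> E.span BT" "card BT = E.dim T"
    by (rule E.basis_exists)
  have fBT: "finite BT"
    using E.independent_span_bound[OF finite_delta_Pd BT(2)] BT(1) T(2) grade_span by blast
  define F where "F p = (\<Sum>t\<in>BT. scaleE (wedge p t top5) t)" for p :: "'a ext"
  have linF: "Vector_Spaces.linear scaleE scaleE F"
    by (simp add: Vector_Spaces.linear_iff vs_E F_def wedge_add_left wedge_scale_left sum.distrib
        E.scale_left_distrib E.scale_sum_right)
  have "E.dim (grade 2 :: 'a ext set) \<le> E.dim {x\<in>grade 2. F x = 0} + E.dim (F ` grade 2)"
    by (rule rank_nullity_le[OF grade_subspace finite_delta_Pd grade_span linF])
  moreover have "E.dim (F ` grade 2) \<le> 8"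
  proof -
    have "F p \<in> E.span BT" for p unfolding F_def
      by (rule E.span_sum, rule E.span_scale, rule E.span_base, assumption)
    then have "F ` grade 2 \<subseteq> E.span BT" by blast
    then show ?thesis using E.dim_le_card[OF _ fBT] BT(4) T(3) by fastforce
  qed
  ultimately have dK: "E.dim {x\<in>grade 2. F x = 0} \<ge> 2" using dim_grade[of 2, where 'a='a] choose_vals by linarith
  obtain BK where BK: "BK \<subseteq> {x\<in>grade 2. F x = 0}" "\<not> E.dependent BK" "{x\<in>grade 2. F x = 0} \<subseteq> E.span BK" "card BK = E.dim {x\<in>grade 2. F x = 0}"
    by (rule E.basis_exists)
  have fBK: "finite BK"
    using E.independent_span_bound[OF finite_delta_Pd BK(2)] BK(1) grade_span by blast
  obtain p1 p2 where pp: "p1 \<in> BK" "p2 \<in> BK" "p1 \<noteq> p2" using two_elems[OF fBK] dK BK(4) by auto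
  have zero: "\<forall>t\<in>T. wedge p t top5 = 0" if p: "p \<in> BK" for p
  proof -
    have Fp: "F p = 0" using p BK(1) by auto
    have "\<forall>t\<in>BT. wedge p t top5 = 0"
    proof (rule ccontr)
      assume "\<not> ?thesis"
      then have ex: "\<exists>t\<in>BT. wedge p t top5 \<noteq> 0" by blast
      have Fp': "(\<Sum>t\<in>BT. scaleE (wedge p t top5) t) = 0" using Fp unfolding F_def .
      have "\<exists>u. (\<exists>v\<in>BT. u v \<noteq> 0) \<and> (\<Sum>v\<in>BT. scaleE (u v) v) = 0"
        by (rule exI[of _ "\<lambda>t. wedge p t top5"], rule conjI[OF ex Fp'])
      then have "E.dependent BT" unfolding E.dependent_finite[OF fBT] .
      then show False using BT(2) by simp
    qed
    moreover have lin: "Vector_Spaces.linear scaleE ((*)::'a\<Rightarrow>'a\<Rightarrow>'a) (\<lambda>t. wedge p t top5)"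
      by (simp add: Vector_Spaces.linear_iff vs_E vs_F wedge_add_right wedge_scale_right)
    ultimately show ?thesis using BT(3) EP.linear_eq_0_on_span[OF lin, of BT] by blast
  qed
  have "p1 \<in> grade 2" "p2 \<in> grade 2" using pp BK(1) by auto
  moreover have "\<not> E.dependent {p1, p2}" using E.independent_mono[OF BK(2), of "{p1, p2}"] pp by blast
  ultimately show ?thesis using pp(3) zero[OF pp(1)] zero[OF pp(2)] by blast
qed

lemma grade4_top:
  assumes r: "r \<in> grade 4" "r U \<noteq> 0"
  shows "\<exists>k<5. U = top5 - {k}"
proof -
  have U: "U \<subseteq> top5" "card U = 4" using r by (auto simp: grade_def)
  have "card (top5 - U) = 1" using U by (simp add: card_Diff_subset finite_subset)
  then obtain k where k: "top5 - U = {k}" by (auto simp: card_Suc_eq)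
  then have "U = top5 - {k}" "k < 5" using U by auto
  then show ?thesis by blast
qed

lemma grade4_zero:
  assumes r: "r \<in> grade 4" and z: "\<And>k. k < 5 \<Longrightarrow> phiOf r k = 0"
  shows "r = 0"
proof (rule ext, rule ccontr)
  fix U assume "r U \<noteq> 0 U"
  then have "r U \<noteq> 0" by simp
  then obtain k where k: "k < 5" "U = top5 - {k}" using grade4_top[OF r(1)] by blast
  then have "phiOf r k = r U * (-1)^k" by (simp add: phiOf_val)
  then show False using z[OF k(1)] \<open>r U \<noteq> 0\<close> by simp
qed

lemma pairing_zero:
  assumes p: "p \<in> grade 2" and q: "q \<in> grade 2"
    and z: "\<And>l. l \<in> grade 1 \<Longrightarrow> wedge p (wedge l q) top5 = 0"
  shows "wedge p q = 0"
proof (rule grade4_zero)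
  show "wedge p q \<in> grade 4" using wedge_grade[OF p q] by simp
  fix k :: nat assume k: "k < 5"
  have "wedge p (wedge (ee k) q) = wedge (ee k) (wedge p q)"
    using wedge_comm2[OF ee_grade[OF k] p] by (simp add: wedge_assoc[symmetric])
  then show "phiOf (wedge p q) k = 0" using z[OF ee_grade[OF k]] by (simp add: phiOf_def)
qed


lemma iota_wedge11:
  assumes l: "l \<in> grade 1" and m: "m \<in> grade 1"
  shows "iota \<phi> (wedge l m) = scaleE (ev \<phi> l) m - scaleE (ev \<phi> m) l"
proof -
  have "iota \<phi> (wedge l m) = scaleE (ev \<phi> l) m - wedge l (scaleE (ev \<phi> m) one)"
    using antider_grade1[OF l grade_extAlg[OF m]] iota_grade1[OF m] by simp
  also have "wedge l (scaleE (ev \<phi> m) one) = scaleE (ev \<phi> m) l"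
    by (simp add: wedge_scale_right wedge_one_right grade_extAlg[OF l])
  finally show ?thesis .
qed

lemma grade1_zero:
  assumes "l \<in> grade 1" "\<And>j. j < 5 \<Longrightarrow> l {j} = 0"
  shows "l = 0"
  using grade1_eq[OF assms(1)] assms(2) by (simp add: sum.neutral fun_eq_iff)

lemma wedge2_sub: "E.subspace (wedge2 V)"
  by (simp add: wedge2_def)

lemma caseA:
  assumes p: "p \<in> grade 2" and pp: "wedge p p \<noteq> 0" and W: "W \<subseteq> grade 2"
    and pq: "\<And>q. q \<in> W \<Longrightarrow> wedge p q = 0"
  shows "\<exists>V. V \<subseteq> grade 1 \<and> E.subspace V \<and> E.dim V = 4 \<and> W \<subseteq> wedge2 (V :: 'a::field ext set)"
proof -
  define \<phi> where "\<phi> = phiOf (wedge p p)"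
  have r4: "wedge p p \<in> grade 4" using wedge_grade[OF p p] by simp
  obtain k where k: "k < 5" "\<phi> k \<noteq> 0"
    using grade4_zero[OF r4] pp unfolding \<phi>_def by blast
  define z where "z = scaleE (1 / \<phi> k) (ee k)"
  have z1: "z \<in> grade 1" unfolding z_def using ee_grade[OF k(1)] grade_subspace E.subspace_scale by blast
  have ez: "ev \<phi> z = 1" using k by (simp add: z_def ev_scale ev_ee)
  define V where "V = {l \<in> grade 1. ev \<phi> l = 0}"
  have Vsub: "E.subspace V"
    using grade_subspace[of 1] by (auto simp: V_def E.subspace_def ev_add ev_scale)
  have V1: "V \<subseteq> grade 1" by (auto simp: V_def)
  define F where "F l = scaleE (ev \<phi> l) z" for l
  have linF: "Vector_Spaces.linear scaleE scaleE F"
    by (simp add: Vector_Spaces.linear_iff vs_E F_def ev_add ev_scale E.scale_left_distrib)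
  have KV: "{x\<in>grade 1. F x = 0} = V"
  proof -
    have znz: "z \<noteq> 0" using ez by auto
    show ?thesis using znz by (auto simp: V_def F_def)
  qed
  have "E.dim (grade 1 :: 'a ext set) \<le> E.dim {x\<in>grade 1. F x = 0} + E.dim (F ` grade 1)"
    by (rule rank_nullity_le[OF grade_subspace finite_delta_Pd grade_span linF])
  then have "E.dim (grade 1 :: 'a ext set) \<le> E.dim V + E.dim (F ` grade 1)" unfolding KV .
  moreover have "E.dim (F ` grade 1) \<le> 1"
  proof -
    have "F ` grade 1 \<subseteq> E.span {z}" by (auto simp: F_def intro: E.span_scale E.span_base)
    then show ?thesis using E.dim_le_card[of "F ` grade 1" "{z}"] by simp
  qed
  ultimately have d1: "E.dim V \<ge> 4" using dim_grade[of 1, where 'a='a] choose_vals by linarith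
  have d2: "E.dim V \<le> 4"
  proof -
    obtain BV where BV: "BV \<subseteq> V" "\<not> E.dependent BV" "V \<subseteq> E.span BV" "card BV = E.dim V"
      by (rule E.basis_exists)
    have "E.span BV \<subseteq> V" using BV(1) E.span_minimal Vsub by blast
    then have "z \<notin> E.span BV" using ez by (auto simp: V_def)
    then have ind: "\<not> E.dependent (insert z BV)" using E.independent_insertI BV(2) by blast
    have "insert z BV \<subseteq> E.span ((delta :: nat set \<Rightarrow> 'a ext) ` Pd 1)"
      using z1 BV(1) V1 grade_span by blast
    then have "card (insert z BV) \<le> card ((delta :: nat set \<Rightarrow> 'a ext) ` Pd 1)" and fin: "finite (insert z BV)"
      using E.independent_span_bound[OF finite_delta_Pd ind] by auto
    moreover have "card ((delta :: nat set \<Rightarrow> 'a ext) ` Pd 1) = 5"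
      using card_Pd[of 1] choose_vals by (simp add: card_image inj_on_subset[OF delta_inj])
    moreover have "card (insert z BV) = card BV + 1"
      using fin \<open>z \<notin> E.span BV\<close> E.span_base by (auto simp: card_insert_if)
    ultimately show ?thesis using BV(4) by simp
  qed
  have proj: "q - wedge z (iota \<phi> q) \<in> wedge2 V" if q: "q \<in> grade 2" for q
  proof -
    let ?P = "{q. q - wedge z (iota \<phi> q) \<in> wedge2 V}"
    have sub: "E.subspace ?P"
    proof -
      have W2: "E.subspace (wedge2 V)" by (rule wedge2_sub)
      have "E.subspace {q. (q - wedge z (iota \<phi> q)) \<in> wedge2 V}"
        unfolding E.subspace_def
      proof (intro conjI ballI allI)
        show "0 \<in> {q. q - wedge z (iota \<phi> q) \<in> wedge2 V}" using E.subspace_0[OF W2] by simp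
        fix x y assume x: "x \<in> {q. q - wedge z (iota \<phi> q) \<in> wedge2 V}" and y: "y \<in> {q. q - wedge z (iota \<phi> q) \<in> wedge2 V}"
        have eq: "(x + y) - wedge z (iota \<phi> (x + y)) = (x - wedge z (iota \<phi> x)) + (y - wedge z (iota \<phi> y))"
          by (simp only: iota_add wedge_add_right add_diff_add)
        have mem: "(x - wedge z (iota \<phi> x)) + (y - wedge z (iota \<phi> y)) \<in> wedge2 V"
          using E.subspace_add[OF W2] x y by blast
        show "x + y \<in> {q. q - wedge z (iota \<phi> q) \<in> wedge2 V}"
          unfolding mem_Collect_eq eq by (rule mem)
      next
        fix c x assume x: "x \<in> {q. q - wedge z (iota \<phi> q) \<in> wedge2 V}"
        have eq: "scaleE c x - wedge z (iota \<phi> (scaleE c x)) = scaleE c (x - wedge z (iota \<phi> x))"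
          by (simp only: iota_scale wedge_scale_right E.scale_right_diff_distrib)
        have mem: "scaleE c (x - wedge z (iota \<phi> x)) \<in> wedge2 V"
          using E.subspace_scale[OF W2] x by blast
        show "scaleE c x \<in> {q. q - wedge z (iota \<phi> q) \<in> wedge2 V}"
          unfolding mem_Collect_eq eq by (rule mem)
      qed
      then show ?thesis by simp
    qed
    have gen: "wedge l m \<in> ?P" if l: "l \<in> grade 1" and m: "m \<in> grade 1" for l m
    proof -
      define pl where "pl = l - scaleE (ev \<phi> l) z"
      define pm where "pm = m - scaleE (ev \<phi> m) z"
      have plV: "pl \<in> V" unfolding pl_def V_def
        using E.subspace_diff[OF grade_subspace l E.subspace_scale[OF grade_subspace z1]] ez
        by (simp add: ev_diff ev_scale)
      have pmV: "pm \<in> V" unfolding pm_def V_def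
        using E.subspace_diff[OF grade_subspace m E.subspace_scale[OF grade_subspace z1]] ez
        by (simp add: ev_diff ev_scale)
      have "wedge pl pm = wedge l m - scaleE (ev \<phi> m) (wedge l z) - scaleE (ev \<phi> l) (wedge z m)
             + scaleE (ev \<phi> l * ev \<phi> m) (wedge z z)"
        unfolding pl_def pm_def wedge_diff_left wedge_diff_right wedge_scale_left wedge_scale_right
        apply (rule ext) apply (simp only: minus_apply plus_fun_apply scaleE_apply zero_fun_apply uminus_apply) by algebra
      also have "\<dots> = wedge l m - scaleE (ev \<phi> l) (wedge z m) + scaleE (ev \<phi> m) (wedge z l)"
        using wedge_self_grade1[OF z1] wedge_anticomm[OF l z1] by simp
      also have "\<dots> = wedge l m - wedge z (iota \<phi> (wedge l m))"
        by (simp add: iota_wedge11[OF l m] wedge_diff_right wedge_scale_right)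
      finally have "wedge l m - wedge z (iota \<phi> (wedge l m)) = wedge pl pm" by simp
      moreover have "wedge pl pm \<in> wedge2 V" unfolding wedge2_def
        using plV pmV by (intro E.span_base) blast
      ultimately show ?thesis by simp
    qed
    show ?thesis using grade2_induct[OF q sub] gen ee_grade by blast
  qed
  have "W \<subseteq> wedge2 V"
  proof
    fix q assume qW: "q \<in> W"
    then have q: "q \<in> grade 2" using W by blast
    have "iota \<phi> q = 0"
    proof (rule grade1_zero)
      show "iota \<phi> q \<in> grade 1" using iota_grade2 q by blast
      fix j :: nat assume j: "j < 5"
      have "iota \<phi> q {j} = -2 * iota (phiOf (wedge p q)) p {j}"
        unfolding \<phi>_def by (rule caseA_identity[OF p q j])
      also have "phiOf (wedge p q) = (\<lambda>k. 0)" unfolding phiOf_def pq[OF qW] by simp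
      finally show "iota \<phi> q {j} = 0" by (simp add: iota_def)
    qed
    then show "q \<in> wedge2 V" using proj[OF q] by simp
  qed
  then show ?thesis using V1 Vsub d1 d2 by (intro exI[of _ V]) auto
qed


lemma wedge_ll_r:
  assumes a: "a \<in> grade 1" shows "wedge a (wedge a f) = 0"
  by (simp add: wedge_assoc[symmetric] wedge_self_grade1[OF a])

lemma iota_kill2:
  assumes c: "c \<in> grade 1" and d: "d \<in> grade 1" and "ev \<phi> c = 0" "ev \<phi> d = 0"
  shows "iota \<phi> (wedge c d) = 0"
  using iota_wedge11[OF c d] assms by simp

lemma span2_wedge:
  assumes c: "c \<in> grade 1" and d: "d \<in> grade 1" and y: "y \<in> E.span {c, d}"
  shows "wedge y (wedge c d) = 0"
proof -
  have sub: "E.subspace {y. wedge y (wedge c d) = 0}"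
    by (auto simp: E.subspace_def wedge_add_left wedge_scale_left)
  have "wedge c (wedge c d) = 0" by (rule wedge_ll_r[OF c])
  moreover have "wedge d (wedge c d) = 0"
    using wedge_anticomm[OF c d] wedge_ll_r[OF d] by (simp add: wedge_minus_right)
  ultimately have "{c, d} \<subseteq> {y. wedge y (wedge c d) = 0}" by auto
  then show ?thesis using E.span_minimal[OF _ sub] y by blast
qed

lemma caseB:
  assumes two: "(2::'a::field) \<noteq> 0"
    and W: "E.subspace W" "W \<subseteq> grade 2" "E.dim W = 3"
    and p: "p1 \<in> grade 2" "p2 \<in> grade 2" "p1 \<noteq> p2" "\<not> E.dependent {p1, p2}"
    and pq: "\<And>q. q \<in> W \<Longrightarrow> wedge p1 q = 0 \<and> wedge p2 q = (0::'a ext)"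
    and sq: "wedge p1 p1 = 0" "wedge p2 p2 = 0" "wedge (p1 + p2) (p1 + p2) = 0"
  shows "\<exists>P. rank2_pencil P \<and> P \<subseteq> W"
proof -
  have p1nz: "p1 \<noteq> 0" and p2nz: "p2 \<noteq> 0" using p(4) E.dependent_zero by blast+
  obtain a b where ab: "a \<in> grade 1" "b \<in> grade 1" "p1 = wedge a b" using decomposable[OF two p(1) p1nz sq(1)] by blast
  obtain c d where cd: "c \<in> grade 1" "d \<in> grade 1" "p2 = wedge c d" using decomposable[OF two p(2) p2nz sq(2)] by blast
  have cdg: "wedge c d \<in> grade 2" using wedge_grade11[OF cd(1,2)] .
  have comm: "wedge p2 p1 = wedge p1 p2"
  proof -
    have c1: "wedge (wedge c d) a = wedge a (wedge c d)" using wedge_comm2[OF ab(1) cdg] by (rule sym)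
    have c2: "wedge (wedge c d) b = wedge b (wedge c d)" using wedge_comm2[OF ab(2) cdg] by (rule sym)
    have "wedge (wedge c d) (wedge a b) = wedge (wedge (wedge c d) a) b" by (rule wedge_assoc[symmetric])
    also have "\<dots> = wedge (wedge a (wedge c d)) b" by (simp only: c1)
    also have "\<dots> = wedge a (wedge (wedge c d) b)" by (rule wedge_assoc)
    also have "\<dots> = wedge a (wedge b (wedge c d))" by (simp only: c2)
    also have "\<dots> = wedge (wedge a b) (wedge c d)" by (rule wedge_assoc[symmetric])
    finally show ?thesis using ab cd by simp
  qed
  have p12: "wedge p1 p2 = 0"
  proof -
    have "0 = wedge (p1 + p2) (p1 + p2)" using sq(3) by simp
    also have "\<dots> = scaleE 2 (wedge p1 p2)"
      unfolding wedge_add_left wedge_add_right sq(1,2) comm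
      apply (rule ext) apply (simp only: minus_apply plus_fun_apply scaleE_apply zero_fun_apply uminus_apply) by algebra
    finally show ?thesis using two by (simp add: fun_eq_iff)
  qed
  have anz: "a \<noteq> 0" using p1nz ab by auto
  obtain x where x: "x \<in> grade 1" "x \<noteq> 0" "wedge x p1 = 0" "wedge x p2 = 0"
  proof (cases "wedge a (wedge c d) = 0")
    case True
    show ?thesis
      by (rule that[of a]) (use ab cd anz True wedge_ll_r[OF ab(1)] in auto)
  next
    case False
    have "wedge b (wedge a (wedge c d)) = - wedge p1 p2"
      using wedge_anticomm[OF ab(2) ab(1)] ab cd by (simp add: wedge_assoc[symmetric] wedge_minus_left)
    then have z: "wedge b (wedge a (wedge c d)) = 0" using p12 by simp
    have "b \<in> E.span {a, c, d}"
    proof (rule not_in_span_wedge[OF ab(2) _ wedge_extAlg False _ z])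
      show "{a, c, d} \<subseteq> grade 1" using ab cd by auto
      fix \<phi> assume "\<forall>s\<in>{a, c, d}. ev \<phi> s = 0"
      then show "iota \<phi> (wedge a (wedge c d)) = 0"
        using antider_grade1[OF ab(1) wedge_extAlg, of \<phi> c d] iota_kill2[OF cd(1,2)] by simp
    qed
    then obtain \<alpha> where \<alpha>: "b - scaleE \<alpha> a \<in> E.span {c, d}" using E.span_breakdown_eq by blast
    define y where "y = b - scaleE \<alpha> a"
    have y1: "y \<in> grade 1" unfolding y_def
      by (rule E.subspace_diff[OF grade_subspace ab(2) E.subspace_scale[OF grade_subspace ab(1)]])
    have "y \<noteq> 0"
    proof
      assume "y = 0"
      then have "b = scaleE \<alpha> a" by (simp add: y_def)
      then have "p1 = 0" using ab wedge_self_grade1[OF ab(1)] by (simp add: wedge_scale_right)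
      then show False using p1nz by simp
    qed
    moreover have "wedge y p1 = 0"
    proof -
      have "wedge y p1 = wedge b (wedge a b) - scaleE \<alpha> (wedge a (wedge a b))"
        by (simp add: y_def ab wedge_diff_left wedge_scale_left)
      also have "wedge b (wedge a b) = 0"
        using wedge_anticomm[OF ab(2) ab(1)] wedge_self_grade1[OF ab(2)]
        by (simp add: wedge_assoc[symmetric] wedge_minus_left wedge_assoc)
      finally show ?thesis using wedge_ll_r[OF ab(1)] by (simp add: fun_eq_iff)
    qed
    moreover have "wedge y p2 = 0" using span2_wedge[OF cd(1,2)] \<alpha> cd by (simp add: y_def)
    ultimately show ?thesis using that y1 by blast
  qed
  obtain b' where b': "b' \<in> grade 1" "p1 = wedge x b'" using division2[OF x(1,2) p(1) x(3)] by blast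
  obtain c' where c': "c' \<in> grade 1" "p2 = wedge x c'" using division2[OF x(1,2) p(2) x(4)] by blast
  have b'nz: "b' \<noteq> 0" using b' p1nz by auto
  have bc: "wedge b' c' \<noteq> 0"
  proof
    assume bc0: "wedge b' c' = 0"
    have "c' \<in> E.span {b'}"
    proof (rule not_in_span_wedge[OF c'(1) _ grade_extAlg[OF b'(1)] b'nz])
      show "{b'} \<subseteq> grade 1" using b' by auto
      show "\<And>\<phi>. \<forall>s\<in>{b'}. ev \<phi> s = 0 \<Longrightarrow> iota \<phi> b' = 0" using iota_grade1[OF b'(1)] by simp
      show "wedge c' b' = 0" using wedge_anticomm[OF c'(1) b'(1)] bc0 by simp
    qed
    then obtain \<beta> where "c' = scaleE \<beta> b'" using E.span_singleton by auto
    then have "p2 = scaleE \<beta> p1" using b' c' by (simp add: wedge_scale_right)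
    then have "scaleE \<beta> p1 + scaleE (-1) p2 = 0" by (simp add: fun_eq_iff)
    then show False using indep2[OF p(4) p(3), of \<beta> "-1"] by simp
  qed
  have xns: "x \<notin> E.span {b', c'}"
  proof
    assume "x \<in> E.span {b', c'}"
    then obtain \<beta> where "x - scaleE \<beta> b' \<in> E.span {c'}" using E.span_breakdown_eq by blast
    then obtain \<gamma> where xe: "x - scaleE \<beta> b' = scaleE \<gamma> c'" using E.span_singleton by auto
    then have xe': "x = scaleE \<beta> b' + scaleE \<gamma> c'" by (simp add: diff_eq_eq add.commute)
    have e1: "p1 = scaleE \<gamma> (wedge c' b')"
      using b' xe' wedge_self_grade1[OF b'(1)] by (simp add: wedge_add_left wedge_scale_left)
    have e2: "p2 = scaleE \<beta> (wedge b' c')"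
      using c' xe' wedge_self_grade1[OF c'(1)] by (simp add: wedge_add_left wedge_scale_left)
    have anti: "wedge c' b' = - wedge b' c'" using wedge_anticomm[OF c'(1) b'(1)] .
    have "scaleE \<beta> p1 + scaleE \<gamma> p2 = 0"
      unfolding e1 e2 anti apply (rule ext) apply (simp only: minus_apply plus_fun_apply scaleE_apply zero_fun_apply uminus_apply) by algebra
    then have "\<beta> = 0 \<and> \<gamma> = 0" using indep2[OF p(4) p(3)] by blast
    then show False using xe' x(2) by (simp add: fun_eq_iff)
  qed
  obtain \<psi> where \<psi>: "ev \<psi> x = 1" "ev \<psi> b' = 0" "ev \<psi> c' = 0"
    using functional_exists[OF x(1) _ xns] b' c' by auto
  have img: "wedge x q \<in> E.span {wedge x (wedge b' c')}" if qW: "q \<in> W" for q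
  proof -
    have q: "q \<in> grade 2" using qW W(2) by blast
    define iq where "iq = iota \<psi> q"
    have iq1: "iq \<in> grade 1" using iota_grade2 q by (simp add: iq_def)
    define r where "r = q - wedge x iq"
    have r2: "r \<in> grade 2" unfolding r_def
      by (rule E.subspace_diff[OF grade_subspace q wedge_grade11[OF x(1) iq1]])
    have key: "wedge r u = 0" if u: "u \<in> grade 1" "ev \<psi> u = 0" "wedge x (wedge q u) = 0" for u
    proof -
      have qu: "wedge q u = wedge u q" using wedge_comm2[OF u(1) q] by simp
      have "0 = iota \<psi> (wedge x (wedge q u))" using u(3) by simp
      also have "\<dots> = wedge q u - wedge x (iota \<psi> (wedge u q))"
        using antider_grade1[OF x(1) wedge_extAlg] \<psi>(1) qu by simp
      also have "iota \<psi> (wedge u q) = - wedge u iq"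
        using antider_grade1[OF u(1) grade_extAlg[OF q]] u(2) by (simp add: iq_def)
      finally have z0: "0 = wedge q u - wedge x (- wedge u iq)" .
      then have "wedge q u - wedge x (- wedge u iq) = 0" by (rule sym)
      then have "wedge q u = wedge x (- wedge u iq)" by (simp only: right_minus_eq)
      then have e: "wedge q u = - wedge x (wedge u iq)" by (simp only: wedge_minus_right)
      have an: "wedge iq u = - wedge u iq" using wedge_anticomm[OF iq1 u(1)] by simp
      have "wedge r u = wedge q u - wedge x (wedge iq u)"
        by (simp add: r_def wedge_diff_left wedge_assoc)
      also have "\<dots> = - wedge x (wedge u iq) - (- wedge x (wedge u iq))"
        by (simp only: e an wedge_minus_right)
      also have "\<dots> = 0" by (rule diff_self)
      finally show ?thesis .
    qed
    have rb: "wedge r b' = 0"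
    proof (rule key[OF b'(1) \<psi>(2)])
      have "wedge p1 q = 0" using pq[OF qW] by simp
      then show "wedge x (wedge q b') = 0"
        using b' wedge_comm2[OF b'(1) q] by (simp add: wedge_assoc)
    qed
    have rc: "wedge r c' = 0"
    proof (rule key[OF c'(1) \<psi>(3)])
      have "wedge p2 q = 0" using pq[OF qW] by simp
      then show "wedge x (wedge q c') = 0"
        using c' wedge_comm2[OF c'(1) q] by (simp add: wedge_assoc)
    qed
    obtain m where m: "m \<in> grade 1" "r = wedge b' m"
      using division2[OF b'(1) b'nz r2] rb wedge_comm2[OF b'(1) r2] by auto
    have "m \<in> E.span {b', c'}"
    proof (rule not_in_span_wedge[OF m(1) _ wedge_extAlg bc])
      show "{b', c'} \<subseteq> grade 1" using b' c' by auto
      show "\<And>\<phi>. \<forall>s\<in>{b', c'}. ev \<phi> s = 0 \<Longrightarrow> iota \<phi> (wedge b' c') = 0"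
        using iota_kill2[OF b'(1) c'(1)] by simp
      have "wedge m (wedge b' c') = wedge (wedge b' c') m"
        using wedge_comm2[OF m(1) wedge_grade11[OF b'(1) c'(1)]] by simp
      also have "\<dots> = - wedge r c'"
        using m wedge_anticomm[OF c'(1) m(1)] by (simp add: wedge_assoc wedge_minus_right)
      finally show "wedge m (wedge b' c') = 0" using rc by simp
    qed
    then obtain \<beta> where "m - scaleE \<beta> b' \<in> E.span {c'}" using E.span_breakdown_eq by blast
    then obtain \<gamma> where "m - scaleE \<beta> b' = scaleE \<gamma> c'" using E.span_singleton by auto
    then have "m = scaleE \<beta> b' + scaleE \<gamma> c'" by (simp add: diff_eq_eq add.commute)
    then have "r = scaleE \<gamma> (wedge b' c')"
      using m wedge_self_grade1[OF b'(1)] by (simp add: wedge_add_right wedge_scale_right)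
    moreover have "wedge x q = wedge x r"
      using wedge_ll_r[OF x(1)] by (simp add: r_def wedge_diff_right)
    ultimately have "wedge x q = scaleE \<gamma> (wedge x (wedge b' c'))" by (simp add: wedge_scale_right)
    then show ?thesis by (simp add: E.span_scale E.span_base)
  qed
  have linF: "Vector_Spaces.linear scaleE scaleE (wedge x)" by (rule linear_wedge_right)
  have "E.dim W \<le> E.dim {q\<in>W. wedge x q = 0} + E.dim (wedge x ` W)"
    by (rule rank_nullity_le[OF W(1) finite_delta_Pd _ linF]) (use W(2) grade_span in blast)
  moreover have "E.dim (wedge x ` W) \<le> 1"
    using img E.dim_le_card[of "wedge x ` W" "{wedge x (wedge b' c')}"] by fastforce
  ultimately have dK: "E.dim {q\<in>W. wedge x q = 0} \<ge> 2" using W(3) by simp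
  obtain BK where BK: "BK \<subseteq> {q\<in>W. wedge x q = 0}" "\<not> E.dependent BK" "{q\<in>W. wedge x q = 0} \<subseteq> E.span BK" "card BK = E.dim {q\<in>W. wedge x q = 0}"
    by (rule E.basis_exists)
  have fBK: "finite BK"
    using E.independent_span_bound[OF finite_delta_Pd BK(2)] BK(1) W(2) grade_span by blast
  obtain q1 q2 where qq: "q1 \<in> BK" "q2 \<in> BK" "q1 \<noteq> q2" using two_elems[OF fBK] dK BK(4) by auto
  have ind: "\<not> E.dependent {q1, q2}" using E.independent_mono[OF BK(2)] qq by auto
  define P where "P = E.span {q1, q2}"
  have "{q1, q2} \<subseteq> W" using qq BK(1) by blast
  then have PW: "P \<subseteq> W" unfolding P_def by (rule E.span_minimal[OF _ W(1)])
  have "E.dim P = 2" unfolding P_def E.dim_span_eq_card_independent[OF ind] using qq(3) by simp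
  moreover have "E.subspace P" unfolding P_def by (rule E.subspace_span)
  moreover have "P \<subseteq> grade 2" using PW W(2) by (rule order_trans)
  ultimately have pen: "pencil P" unfolding pencil_def by blast
  have "rank2_quadric s" if s: "s \<in> P" "s \<noteq> 0" for s
  proof -
    have s2: "s \<in> grade 2" using s PW W(2) by blast
    have sub: "E.subspace {s. wedge x s = 0}"
      by (auto simp: E.subspace_def wedge_add_right wedge_scale_right)
    have "{q1, q2} \<subseteq> {s. wedge x s = 0}" using qq BK(1) by auto
    then have "wedge x s = 0" using E.span_minimal[OF _ sub] s(1) unfolding P_def by blast
    then obtain m where m: "m \<in> grade 1" "s = wedge x m" using division2[OF x(1,2) s2 \<open>wedge x s = 0\<close>] by blast
    have mns: "m \<notin> E.span {x}"
    proof
      assume "m \<in> E.span {x}"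
      then obtain \<beta> where "m = scaleE \<beta> x" using E.span_singleton by auto
      then have "s = 0" using m wedge_self_grade1[OF x(1)] by (simp add: wedge_scale_right)
      then show False using s(2) by simp
    qed
    have "\<not> E.dependent {x, m}"
    proof -
      have "\<not> E.dependent {x}" using x(2) by simp
      then have "\<not> E.dependent (insert m {x})" using E.independent_insertI mns by blast
      then show ?thesis by (simp add: insert_commute)
    qed
    moreover have "x \<noteq> m" using mns E.span_base by blast
    ultimately show ?thesis unfolding rank2_quadric_def using x(1) m by blast
  qed
  then have "rank2_pencil P" using pen by (auto simp: rank2_pencil_def)
  then show ?thesis using PW by blast
qed


theorem lemma5p2:
  fixes I :: "'a::field ext set"
  assumes "alg_closed TYPE('a)"
    and "(2::'a) \<noteq> 0"
    and "homogeneous_ideal I"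
    and "hilbert_fun I 0 = 1" and "hilbert_fun I 1 = 5"
    and "hilbert_fun I 2 = 7" and "hilbert_fun I 3 = 2"
    and "\<forall>d\<ge>4. hilbert_fun I d = 0"
    and "\<not> (\<exists>P. rank2_pencil P \<and> P \<subseteq> I)"
  shows "\<exists>V. V \<subseteq> grade 1 \<and> module.subspace (scaleE :: 'a \<Rightarrow> _) V \<and>
             vector_space.dim (scaleE :: 'a \<Rightarrow> _) V = 4 \<and>
             I \<inter> grade 2 \<subseteq> wedge2 V"
proof -
  note two = assms(2)
  have hI: "I \<subseteq> extAlg" "(\<lambda>S. 0) \<in> I" "\<And>f g. f \<in> I \<Longrightarrow> g \<in> I \<Longrightarrow> (\<lambda>S. f S + g S) \<in> I"
    "\<And>c f. f \<in> I \<Longrightarrow> scaleE c f \<in> I" "\<And>f g. f \<in> I \<Longrightarrow> g \<in> extAlg \<Longrightarrow> wedge g f \<in> I"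
    using assms(3) unfolding homogeneous_ideal_def by blast+
  have Isub: "E.subspace I"
    unfolding E.subspace_def using hI(2,3,4) by (auto simp: zero_fun_def plus_fun_def)
  define W where "W = I \<inter> grade 2"
  define T where "T = I \<inter> grade 3"
  have Wsub: "E.subspace W" unfolding W_def using Isub grade_subspace by (rule E.subspace_inter)
  have Tsub: "E.subspace T" unfolding T_def using Isub grade_subspace by (rule E.subspace_inter)
  have dW: "E.dim W = 3" using assms(6) dim_grade[of 2, where 'a='a] choose_vals unfolding hilbert_fun_def W_def by linarith
  have dT: "E.dim T = 8" using assms(7) dim_grade[of 3, where 'a='a] choose_vals unfolding hilbert_fun_def T_def by linarith
  obtain p1 p2 where p: "p1 \<in> grade 2" "p2 \<in> grade 2" "p1 \<noteq> p2" "\<not> E.dependent {p1, p2}"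
     "\<forall>t\<in>T. wedge p1 t top5 = 0" "\<forall>t\<in>T. wedge p2 t top5 = 0"
    using dual_step[OF Tsub _ dT] by (auto simp: T_def)
  have pq: "wedge p1 q = 0 \<and> wedge p2 q = 0" if qW: "q \<in> W" for q
  proof -
    have q: "q \<in> grade 2" using qW by (simp add: W_def)
    have inT: "wedge l q \<in> T" if l: "l \<in> grade 1" for l
      using hI(5)[of q l] qW grade_extAlg[OF l] wedge_grade12[OF l q] by (simp add: W_def T_def)
    show ?thesis
      using pairing_zero[OF p(1) q] pairing_zero[OF p(2) q] inT p(5,6) by blast
  qed
  have W2: "W \<subseteq> grade 2" by (simp add: W_def)
  show ?thesis
  proof (cases "wedge p1 p1 \<noteq> 0")
    case True
    then show ?thesis using caseA[OF p(1) True W2] pq unfolding W_def by blast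
  next
    case c1: False
    show ?thesis
    proof (cases "wedge p2 p2 \<noteq> 0")
      case True
      then show ?thesis using caseA[OF p(2) True W2] pq unfolding W_def by blast
    next
      case c2: False
      show ?thesis
      proof (cases "wedge (p1 + p2) (p1 + p2) \<noteq> 0")
        case True
        have p12: "p1 + p2 \<in> grade 2" using p(1,2) grade_subspace E.subspace_add by blast
        have "wedge (p1 + p2) q = 0" if "q \<in> W" for q
          using pq[OF that] by (simp add: wedge_add_left)
        then show ?thesis using caseA[OF p12 True W2] unfolding W_def by blast
      next
        case False
        obtain P where "rank2_pencil P" "P \<subseteq> W"
          using caseB[OF two Wsub W2 dW p(1-4) pq] c1 c2 False by blast
        then show ?thesis using assms(9) by (auto simp: W_def)
      qed
    qed
  qed
qed


end
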